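(* Let $\mu$ be a non-zero (countably additive, non-negative, complete) measure on a $\sigma$-algebra $\Sigma$ of subsets of a set $\Omega$, and let $X$ be a Banach space. Suppose the following condition holds: whenever $x,y,z\in S_{L_1(\mu,X)}$ (as functions $\Omega\to X$) satisfy \[ \{\omega\in\Omega:\ \text{$x(\omega)\neq0$ and $y(\omega)=0$, or $x(\omega)=0$ and $y(\omega)\neq 0$}\}=\emptyset, \] and real numbers $\lambda,\nu\in(0,1)$ with $\lambda+\nu=1$ are such that $\lambda x+\nu y=z$ in $L_1(\mu,X)$, and $U$ and $V$ are neighbourhoods of $x$ and $y$, respectively, in the relative weak topology of $B_{L_1(\mu,X)}$, then there is a neighbourhood $W$ of $z$ in the relative weak topology of $B_{L_1(\mu,X)}$ with $W\subset\lambda U+\nu V$. Then $L_1(\mu,X)$ has property CWO-S.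
   Context: For a Banach space $Z$, $B_Z$ denotes its closed unit ball and $S_Z$ its unit sphere. $Z$ has property CWO-S if for every convex combination $C=\sum_{k=1}^m\lambda_kU_k$ ($\lambda_k>0$, $\sum_k\lambda_k=1$) of finitely many relatively weakly open subsets $U_k$ of $B_Z$, every $x\in C\cap S_Z$ is an interior point of $C$ in the relative weak topology of $B_Z$. *)

theory Defs
  imports "HOL-Analysis.Analysis"
begin

text \<open>We do not use the library Bochner integral, since it
  requires the target space to be second countable (i.e. X separable).\<close>
definition strongly_measurable :: "'a measure \<Rightarrow> ('a \<Rightarrow> 'b::real_normed_vector) \<Rightarrow> bool" where
  "strongly_measurable M f \<longleftrightarrow>
     (\<exists>s :: nat \<Rightarrow> 'a \<Rightarrow> 'b. (\<forall>n. simple_function M (s n)) \<and>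
        (AE \<omega> in M. (\<lambda>n. s n \<omega>) \<longlonglongrightarrow> f \<omega>))"

text \<open>Representatives of elements of L_1(mu, X).  Elements of L_1 are equivalence
  classes of these modulo almost-everywhere equality.\<close>
definition L1 :: "'a measure \<Rightarrow> ('a \<Rightarrow> 'b::real_normed_vector) set" where
  "L1 M = {f. strongly_measurable M f \<and> (\<integral>\<^sup>+ \<omega>. ennreal (norm (f \<omega>)) \<partial>M) < \<infinity>}"

definition L1norm :: "'a measure \<Rightarrow> ('a \<Rightarrow> 'b::real_normed_vector) \<Rightarrow> real" where
  "L1norm M f = enn2real (\<integral>\<^sup>+ \<omega>. ennreal (norm (f \<omega>)) \<partial>M)"

definition L1eq :: "'a measure \<Rightarrow> ('a \<Rightarrow> 'b) \<Rightarrow> ('a \<Rightarrow> 'b) \<Rightarrow> bool" where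
  "L1eq M f g \<longleftrightarrow> (AE \<omega> in M. f \<omega> = g \<omega>)"

definition L1ball :: "'a measure \<Rightarrow> ('a \<Rightarrow> 'b::real_normed_vector) set" where
  "L1ball M = {f \<in> L1 M. L1norm M f \<le> 1}"

definition L1sphere :: "'a measure \<Rightarrow> ('a \<Rightarrow> 'b::real_normed_vector) set" where
  "L1sphere M = {f \<in> L1 M. L1norm M f = 1}"

text \<open>The (topological) dual of L_1(mu, X): bounded linear functionals on L_1.
  (Boundedness forces them to respect almost-everywhere equality.)\<close>
definition L1dual :: "'a measure \<Rightarrow> (('a \<Rightarrow> 'b::real_normed_vector) \<Rightarrow> real) set" where
  "L1dual M = {\<phi>.
     (\<forall>f\<in>L1 M. \<forall>g\<in>L1 M. \<phi> (\<lambda>\<omega>. f \<omega> + g \<omega>) = \<phi> f + \<phi> g) \<and>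
     (\<forall>f\<in>L1 M. \<forall>c::real. \<phi> (\<lambda>\<omega>. c *\<^sub>R f \<omega>) = c * \<phi> f) \<and>
     (\<exists>C. \<forall>f\<in>L1 M. \<bar>\<phi> f\<bar> \<le> C * L1norm M f)}"

definition rel_weak_open :: "'a measure \<Rightarrow> ('a \<Rightarrow> 'b::real_normed_vector) set \<Rightarrow> bool" where
  "rel_weak_open M U \<longleftrightarrow> U \<subseteq> L1ball M \<and>
     (\<forall>f\<in>U. \<exists>F e. finite F \<and> F \<subseteq> L1dual M \<and> e > 0 \<and>
        {g \<in> L1ball M. \<forall>\<phi>\<in>F. \<bar>\<phi> g - \<phi> f\<bar> < e} \<subseteq> U)"

definition rel_weak_nhd :: "'a measure \<Rightarrow> ('a \<Rightarrow> 'b::real_normed_vector) set \<Rightarrow> ('a \<Rightarrow> 'b) \<Rightarrow> bool" where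
  "rel_weak_nhd M N f \<longleftrightarrow> N \<subseteq> L1ball M \<and> (\<exists>G. rel_weak_open M G \<and> f \<in> G \<and> G \<subseteq> N)"

text \<open>A set of representatives is saturated if it is closed under a.e. equality;
  saturated sets correspond bijectively to subsets of L_1(mu, X).\<close>
definition L1saturated :: "'a measure \<Rightarrow> ('a \<Rightarrow> 'b::real_normed_vector) set \<Rightarrow> bool" where
  "L1saturated M N \<longleftrightarrow> (\<forall>f\<in>N. \<forall>g\<in>L1 M. L1eq M g f \<longrightarrow> g \<in> N)"

definition L1comb :: "'a measure \<Rightarrow> nat \<Rightarrow> (nat \<Rightarrow> real) \<Rightarrow> (nat \<Rightarrow> ('a \<Rightarrow> 'b::real_normed_vector) set)
     \<Rightarrow> ('a \<Rightarrow> 'b) set" where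
  "L1comb M m lam U = {w \<in> L1 M. \<exists>u. (\<forall>k<m. u k \<in> U k) \<and>
       L1eq M w (\<lambda>\<omega>. \<Sum>k<m. lam k *\<^sub>R u k \<omega>)}"

definition L1_CWO_S :: "'a measure \<Rightarrow> ('a \<Rightarrow> 'b::real_normed_vector) itself \<Rightarrow> bool" where
  "L1_CWO_S M _ \<longleftrightarrow>
     (\<forall>m lam (U :: nat \<Rightarrow> ('a \<Rightarrow> 'b) set).
        (\<forall>k<m. lam k > 0) \<and> (\<Sum>k<m. lam k) = 1 \<and> (\<forall>k<m. rel_weak_open M (U k)) \<longrightarrow>
        (\<forall>x \<in> L1comb M m lam U \<inter> L1sphere M.
           \<exists>G. rel_weak_open M G \<and> x \<in> G \<and> G \<subseteq> L1comb M m lam U))"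

end

theory Submission
  imports Defs
begin


definition hb_ok :: "'b::real_normed_vector \<Rightarrow> ('b \<times> real) set \<Rightarrow> bool" where
 "hb_ok c G \<longleftrightarrow> (\<forall>x a y b. (x,a)\<in>G \<longrightarrow> (y,b)\<in>G \<longrightarrow> (x+y,a+b)\<in>G) \<and>
    (\<forall>x a r. (x,a)\<in>G \<longrightarrow> (r *\<^sub>R x, r*a)\<in>G) \<and> (\<forall>x a. (x,a)\<in>G \<longrightarrow> a \<le> norm x) \<and> (c, norm c)\<in>G"

lemma hb_func:
  assumes "hb_ok c G" "(x,a)\<in>G" "(x,b)\<in>G" shows "a = b"
proof -
  have h: "a' - b' \<le> 0" if "(x,a')\<in>G" "(x,b')\<in>G" for a' b'
  proof -
    have "((-1) *\<^sub>R x, (-1)*b')\<in>G" using assms(1) that(2) unfolding hb_ok_def by blast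
    then have "(x + (-1) *\<^sub>R x, a' + (-1)*b')\<in>G" using assms(1) that(1) unfolding hb_ok_def by blast
    then have "a' + (-1)*b' \<le> norm (x + (-1) *\<^sub>R x)" using assms(1) unfolding hb_ok_def by blast
    then show ?thesis by simp
  qed
  from h[OF assms(2,3)] h[OF assms(3,2)] show ?thesis by simp
qed

lemma hb_zero: "hb_ok c G \<Longrightarrow> (0,0)\<in>G"
  unfolding hb_ok_def by (metis mult_zero_left scaleR_zero_left)

lemma hb_extend:
  fixes c :: "'b::real_normed_vector"
  assumes G: "hb_ok c G" and y: "y \<notin> fst ` G"
  shows "\<exists>G'. hb_ok c G' \<and> G \<subseteq> G' \<and> G \<noteq> G'"
proof -
  define S where "S = {a - norm (x - y) | x a. (x,a) \<in> G}"
  define k where "k = Sup S"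
  have add: "(x+x',a+a')\<in>G" if "(x,a)\<in>G" "(x',a')\<in>G" for x a x' a'
    using G that unfolding hb_ok_def by blast
  have scl: "(r *\<^sub>R x, r*a)\<in>G" if "(x,a)\<in>G" for x a r
    using G that unfolding hb_ok_def by blast
  have bnd: "a \<le> norm x" if "(x,a)\<in>G" for x a
    using G that unfolding hb_ok_def by blast
  have Sne: "S \<noteq> {}" using hb_zero[OF G] unfolding S_def by blast
  have Sbdd: "bdd_above S" unfolding S_def bdd_above_def
  proof (intro exI[of _ "norm y"] ballI)
    fix s assume "s \<in> {a - norm (x - y) | x a. (x,a) \<in> G}"
    then obtain x a where "s = a - norm (x - y)" "(x,a)\<in>G" by blast
    moreover have "norm x \<le> norm (x - y) + norm y" by (metis norm_triangle_sub add.commute)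
    ultimately show "s \<le> norm y" using bnd by fastforce
  qed
  have P1: "a - norm (x - y) \<le> k" if "(x,a)\<in>G" for x a
    unfolding k_def using that by (intro cSup_upper Sbdd) (auto simp: S_def)
  have P2: "k \<le> norm (x + y) - a" if "(x,a)\<in>G" for x a
    unfolding k_def
  proof (rule cSup_least[OF Sne])
    fix s assume "s \<in> S"
    then obtain x' a' where s: "s = a' - norm (x' - y)" "(x',a')\<in>G" unfolding S_def by blast
    have "a' + a \<le> norm (x' + x)" using bnd add[OF s(2) that] by blast
    also have "\<dots> \<le> norm (x' - y) + norm (x + y)"
      using norm_triangle_ineq[of "x' - y" "x + y"] by simp
    finally show "s \<le> norm (x + y) - a" using s by simp
  qed
  define G' where "G' = (\<lambda>((x,a),r). (x + r *\<^sub>R y, a + r*k)) ` (G \<times> (UNIV::real set))"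
  have memG': "(x + r *\<^sub>R y, a + r*k) \<in> G'" if "(x,a)\<in>G" for x a r
    unfolding G'_def using that by (intro image_eqI[of _ _ "((x,a),r)"]) auto
  have elG': "\<exists>x1 a1 r1. (x1,a1)\<in>G \<and> x = x1 + r1 *\<^sub>R y \<and> a = a1 + r1*k" if "(x,a)\<in>G'" for x a
    using that unfolding G'_def by auto
  have "hb_ok c G'"
    unfolding hb_ok_def
  proof (intro conjI allI impI)
    fix x a x' a'
    assume "(x,a)\<in>G'" "(x',a')\<in>G'"
    then obtain x1 a1 r1 x2 a2 r2 where h: "(x1,a1)\<in>G" "(x2,a2)\<in>G"
      "x = x1 + r1 *\<^sub>R y" "a = a1 + r1*k" "x' = x2 + r2 *\<^sub>R y" "a' = a2 + r2*k"
      using elG' by metis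
    have "((x1+x2) + (r1+r2) *\<^sub>R y, (a1+a2) + (r1+r2)*k) \<in> G'"
      by (rule memG') (rule add[OF h(1,2)])
    moreover have "x + x' = (x1+x2) + (r1+r2) *\<^sub>R y" "a + a' = (a1+a2) + (r1+r2)*k"
      using h by (simp_all add: algebra_simps)
    ultimately show "(x+x', a+a')\<in>G'" by simp
  next
    fix x a r
    assume "(x,a)\<in>G'"
    then obtain x1 a1 r1 where h: "(x1,a1)\<in>G" "x = x1 + r1 *\<^sub>R y" "a = a1 + r1*k"
      using elG' by metis
    have "(r *\<^sub>R x1 + (r*r1) *\<^sub>R y, r*a1 + (r*r1)*k) \<in> G'"
      by (rule memG') (rule scl[OF h(1)])
    moreover have "r *\<^sub>R x = r *\<^sub>R x1 + (r*r1) *\<^sub>R y" "r * a = r*a1 + (r*r1)*k"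
      using h by (simp_all add: algebra_simps)
    ultimately show "(r *\<^sub>R x, r*a)\<in>G'" by simp
  next
    fix x a
    assume "(x,a)\<in>G'"
    then obtain x1 a1 r where xa: "(x1,a1)\<in>G" "x = x1 + r *\<^sub>R y" "a = a1 + r*k"
      using elG' by metis
    consider "r > 0" | "r = 0" | "r < 0" by linarith
    then show "a \<le> norm x"
    proof cases
      case 1
      have "k \<le> norm ((1/r) *\<^sub>R x1 + y) - (1/r)*a1" using P2[OF scl[OF xa(1)]] .
      then have "r * k \<le> r * (norm ((1/r) *\<^sub>R x1 + y) - (1/r)*a1)"
        using 1 by (simp add: mult_left_mono)
      also have "r * (norm ((1/r) *\<^sub>R x1 + y) - (1/r)*a1) = norm (r *\<^sub>R ((1/r) *\<^sub>R x1 + y)) - a1"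
        using 1 by (simp add: right_diff_distrib)
      also have "r *\<^sub>R ((1/r) *\<^sub>R x1 + y) = x1 + r *\<^sub>R y"
        using 1 by (simp add: scaleR_add_right)
      finally show ?thesis using xa 1 by (simp add: algebra_simps)
    next
      case 2 then show ?thesis using xa bnd by simp
    next
      case 3
      have "(1/(-r))*a1 - norm ((1/(-r)) *\<^sub>R x1 - y) \<le> k" using P1[OF scl[OF xa(1)]] .
      then have "(-r) * ((1/(-r))*a1 - norm ((1/(-r)) *\<^sub>R x1 - y)) \<le> (-r) * k"
        using 3 by (simp add: mult_left_mono)
      also have "(-r) * ((1/(-r))*a1 - norm ((1/(-r)) *\<^sub>R x1 - y)) = a1 - norm ((-r) *\<^sub>R ((1/(-r)) *\<^sub>R x1 - y))"
        using 3 by (simp add: right_diff_distrib)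
      also have "(-r) *\<^sub>R ((1/(-r)) *\<^sub>R x1 - y) = x1 + r *\<^sub>R y"
        using 3 by (simp add: scaleR_diff_right)
      finally show ?thesis using xa by simp
    qed
  next
    show "(c, norm c) \<in> G'" using memG'[of c "norm c" 0] G unfolding hb_ok_def by simp
  qed
  moreover have "G \<subseteq> G'" using memG'[where r=0] by auto
  moreover have "(y, k) \<in> G'" using memG'[OF hb_zero[OF G], of 1] by simp
  then have "G \<noteq> G'" using y by force
  ultimately show ?thesis by blast
qed

lemma hahn_banach_norming:
  fixes c :: "'b::real_normed_vector"
  shows "\<exists>\<psi>. linear \<psi> \<and> (\<forall>y. \<bar>\<psi> y\<bar> \<le> norm y) \<and> \<psi> c = norm c"
proof -
  define A where "A = {G. hb_ok c G}"
  define G0 where "G0 = range (\<lambda>r. (r *\<^sub>R c, r * norm c))"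
  have "hb_ok c G0" unfolding hb_ok_def G0_def
  proof (intro conjI allI impI)
    fix x a y b assume "(x,a) \<in> range (\<lambda>r. (r *\<^sub>R c, r * norm c))" "(y,b) \<in> range (\<lambda>r. (r *\<^sub>R c, r * norm c))"
    then obtain r s where "x = r *\<^sub>R c" "a = r * norm c" "y = s *\<^sub>R c" "b = s * norm c" by auto
    then show "(x+y,a+b) \<in> range (\<lambda>r. (r *\<^sub>R c, r * norm c))"
      by (intro image_eqI[of _ _ "r+s"]) (simp_all add: algebra_simps)
  next
    fix x a r assume "(x,a) \<in> range (\<lambda>r. (r *\<^sub>R c, r * norm c))"
    then obtain s where "x = s *\<^sub>R c" "a = s * norm c" by auto
    then show "(r *\<^sub>R x, r*a) \<in> range (\<lambda>r. (r *\<^sub>R c, r * norm c))"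
      by (intro image_eqI[of _ _ "r * s"]) simp_all
  next
    fix x a assume "(x,a) \<in> range (\<lambda>r. (r *\<^sub>R c, r * norm c))"
    then obtain s where "x = s *\<^sub>R c" "a = s * norm c" by auto
    then show "a \<le> norm x" by (simp add: mult_right_mono)
  next
    show "(c, norm c) \<in> range (\<lambda>r. (r *\<^sub>R c, r * norm c))" by (intro image_eqI[of _ _ 1]) simp_all
  qed
  then have "A \<noteq> {}" unfolding A_def by blast
  moreover have "\<Union>C \<in> A" if ne: "C \<noteq> {}" and chn: "subset.chain A C" for C
  proof -
    have CA: "C \<subseteq> A" and ch: "\<And>X Y. X\<in>C \<Longrightarrow> Y\<in>C \<Longrightarrow> X \<subseteq> Y \<or> Y \<subseteq> X"
      using chn unfolding subset.chain_def by auto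
    show ?thesis unfolding A_def hb_ok_def
    proof (intro CollectI conjI allI impI)
      fix x a y b assume "(x,a) \<in> \<Union>C" "(y,b) \<in> \<Union>C"
      then obtain X Y where "X\<in>C" "Y\<in>C" "(x,a)\<in>X" "(y,b)\<in>Y" by blast
      have okX: "hb_ok c X" and okY: "hb_ok c Y" using CA \<open>X\<in>C\<close> \<open>Y\<in>C\<close> unfolding A_def by auto
      from ch[OF \<open>X\<in>C\<close> \<open>Y\<in>C\<close>] show "(x+y,a+b)\<in>\<Union>C"
      proof
        assume "X \<subseteq> Y"
        then have "(x+y,a+b) \<in> Y" using okY \<open>(x,a)\<in>X\<close> \<open>(y,b)\<in>Y\<close> unfolding hb_ok_def by blast
        then show ?thesis using \<open>Y\<in>C\<close> by blast
      next
        assume "Y \<subseteq> X"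
        then have "(x+y,a+b) \<in> X" using okX \<open>(x,a)\<in>X\<close> \<open>(y,b)\<in>Y\<close> unfolding hb_ok_def by blast
        then show ?thesis using \<open>X\<in>C\<close> by blast
      qed
    next
      fix x a r assume "(x,a) \<in> \<Union>C"
      then obtain X where "X\<in>C" "(x,a)\<in>X" by blast
      then show "(r *\<^sub>R x, r*a)\<in>\<Union>C" using CA unfolding A_def hb_ok_def by blast
    next
      fix x a assume "(x,a) \<in> \<Union>C"
      then obtain X where "X\<in>C" "(x,a)\<in>X" by blast
      then show "a \<le> norm x" using CA unfolding A_def hb_ok_def by blast
    next
      obtain X where "X \<in> C" using ne by blast
      then show "(c, norm c) \<in> \<Union>C" using CA unfolding A_def hb_ok_def by blast
    qed
  qed
  ultimately obtain Mx where Mx: "Mx \<in> A" "\<forall>X\<in>A. Mx \<subseteq> X \<longrightarrow> X = Mx"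
    using subset_Zorn_nonempty[of A] by blast
  have Mok: "hb_ok c Mx" using Mx(1) unfolding A_def by blast
  have dom: "\<exists>a. (y,a)\<in>Mx" for y
  proof (rule ccontr)
    assume "\<not> (\<exists>a. (y,a)\<in>Mx)"
    then have "y \<notin> fst ` Mx" by force
    from hb_extend[OF Mok this] obtain G' where "hb_ok c G'" "Mx \<subseteq> G'" "Mx \<noteq> G'" by blast
    then show False using Mx(2) unfolding A_def by blast
  qed
  define \<psi> where "\<psi> y = (THE a. (y,a)\<in>Mx)" for y
  have psi: "(y, \<psi> y) \<in> Mx" for y
  proof -
    obtain a where ya: "(y,a)\<in>Mx" using dom by blast
    have "(y, THE a. (y,a)\<in>Mx) \<in> Mx"
    proof (rule theI[of _ a])
      show "(y,a)\<in>Mx" by (rule ya)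
      show "b = a" if "(y,b)\<in>Mx" for b using hb_func[OF Mok that ya] .
    qed
    then show ?thesis unfolding \<psi>_def .
  qed
  have add: "\<psi> (x+y) = \<psi> x + \<psi> y" for x y
    using Mok psi[of x] psi[of y] psi[of "x+y"] hb_func[OF Mok] unfolding hb_ok_def by blast
  have scl: "\<psi> (r *\<^sub>R x) = r * \<psi> x" for r x
    using Mok psi[of x] psi[of "r *\<^sub>R x"] hb_func[OF Mok] unfolding hb_ok_def by blast
  have le: "\<psi> y \<le> norm y" for y using Mok psi[of y] unfolding hb_ok_def by blast
  have "linear \<psi>" by (rule linearI) (auto simp: add scl)
  moreover have "\<bar>\<psi> y\<bar> \<le> norm y" for y
    using le[of y] le[of "(-1) *\<^sub>R y"] scl[of "-1" y] by (simp add: abs_le_iff)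
  moreover have "\<psi> c = norm c" using Mok psi[of c] hb_func[OF Mok] unfolding hb_ok_def by blast
  ultimately show ?thesis by blast
qed


definition rst :: "'a set \<Rightarrow> ('a \<Rightarrow> 'b::real_normed_vector) \<Rightarrow> 'a \<Rightarrow> 'b" where
 "rst S f = (\<lambda>\<omega>. indicator S \<omega> *\<^sub>R f \<omega>)"

lemma sm_simple: "simple_function M s \<Longrightarrow> strongly_measurable M s"
  unfolding strongly_measurable_def by (intro exI[of _ "\<lambda>n. s"]) auto

lemma sm_add:
  assumes "strongly_measurable M f" "strongly_measurable M g"
  shows "strongly_measurable M (\<lambda>\<omega>. f \<omega> + g \<omega>)"
proof -
  obtain s where s: "\<And>n. simple_function M (s n)" "AE \<omega> in M. (\<lambda>n. s n \<omega>) \<longlonglongrightarrow> f \<omega>"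
    using assms(1) unfolding strongly_measurable_def by blast
  obtain t where t: "\<And>n. simple_function M (t n)" "AE \<omega> in M. (\<lambda>n. t n \<omega>) \<longlonglongrightarrow> g \<omega>"
    using assms(2) unfolding strongly_measurable_def by blast
  show ?thesis unfolding strongly_measurable_def
    apply (intro exI[of _ "\<lambda>n \<omega>. s n \<omega> + t n \<omega>"] conjI allI simple_function_compose2[OF s(1) t(1)])
    using s(2) t(2) by eventually_elim (rule tendsto_add)
qed

lemma sm_scale:
  assumes "strongly_measurable M f"
  shows "strongly_measurable M (\<lambda>\<omega>. c *\<^sub>R f \<omega>)"
proof -
  obtain s where s: "\<And>n. simple_function M (s n)" "AE \<omega> in M. (\<lambda>n. s n \<omega>) \<longlonglongrightarrow> f \<omega>"
    using assms(1) unfolding strongly_measurable_def by blast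
  show ?thesis unfolding strongly_measurable_def
    apply (intro exI[of _ "\<lambda>n \<omega>. c *\<^sub>R s n \<omega>"] conjI allI simple_function_compose1[OF s(1)])
    using s(2) by eventually_elim (intro tendsto_intros)
qed

lemma sm_ind:
  assumes "strongly_measurable M f" "E \<in> sets M"
  shows "strongly_measurable M (rst E f)"
proof -
  obtain s where s: "\<And>n. simple_function M (s n)" "AE \<omega> in M. (\<lambda>n. s n \<omega>) \<longlonglongrightarrow> f \<omega>"
    using assms(1) unfolding strongly_measurable_def by blast
  have ind: "simple_function M (indicator E :: 'a \<Rightarrow> real)" using assms(2) by auto
  show ?thesis unfolding strongly_measurable_def rst_def
    apply (intro exI[of _ "\<lambda>n \<omega>. indicator E \<omega> *\<^sub>R s n \<omega>"] conjI allI simple_function_compose2[OF ind s(1)])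
    using s(2) by eventually_elim (intro tendsto_intros)
qed

lemma sm_cong:
  assumes "strongly_measurable M f" "AE \<omega> in M. f \<omega> = g \<omega>"
  shows "strongly_measurable M g"
proof -
  obtain s where s: "\<And>n. simple_function M (s n)" "AE \<omega> in M. (\<lambda>n. s n \<omega>) \<longlonglongrightarrow> f \<omega>"
    using assms(1) unfolding strongly_measurable_def by blast
  show ?thesis unfolding strongly_measurable_def
    apply (intro exI[of _ s] conjI allI s(1))
    using s(2) assms(2) by eventually_elim metis
qed

context
  fixes M :: "'a measure"
  assumes cM: "complete_measure M"
begin

lemma sm_borel:
  fixes f :: "'a \<Rightarrow> 'b::real_normed_vector"
  assumes "strongly_measurable M f" shows "f \<in> borel_measurable M"
proof -
  obtain s where s: "\<And>n. simple_function M (s n)" "AE \<omega> in M. (\<lambda>n. s n \<omega>) \<longlonglongrightarrow> f \<omega>"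
    using assms unfolding strongly_measurable_def by blast
  obtain N where N: "{\<omega>\<in>space M. \<not> (\<lambda>n. s n \<omega>) \<longlonglongrightarrow> f \<omega>} \<subseteq> N" "emeasure M N = 0" "N \<in> sets M"
    using s(2) by (rule AE_E)
  have Nnull: "N \<in> null_sets M" using N by auto
  define g where "g \<omega> = (if \<omega> \<in> N then 0 else f \<omega>)" for \<omega>
  have gm: "g \<in> borel_measurable M"
  proof (rule borel_measurable_LIMSEQ_metric)
    show "(\<lambda>\<omega>. if \<omega> \<in> N then 0 else s i \<omega>) \<in> borel_measurable M" for i
      using borel_measurable_simple_function[OF s(1)] N(3) by (intro measurable_If_set) auto
    show "(\<lambda>i. if \<omega> \<in> N then 0 else s i \<omega>) \<longlonglongrightarrow> g \<omega>" if "\<omega> \<in> space M" for \<omega>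
      using N(1) that by (auto simp: g_def)
  qed
  show ?thesis
  proof (rule borel_measurableI)
    fix S :: "'b set" assume S: "open S"
    have eq: "f -` S \<inter> space M = (g -` S \<inter> space M - N) \<union> (f -` S \<inter> space M \<inter> N)"
      by (auto simp: g_def)
    have "g -` S \<inter> space M \<in> sets M" using measurable_sets[OF gm borel_open[OF S]] .
    moreover have "f -` S \<inter> space M \<inter> N \<in> sets M"
      by (rule complete_measure.complete[OF cM _ Nnull]) blast
    ultimately have "(g -` S \<inter> space M - N) \<union> (f -` S \<inter> space M \<inter> N) \<in> sets M"
      using N(3) by (intro sets.Un sets.Diff)
    then show "f -` S \<inter> space M \<in> sets M" by (simp only: eq[symmetric])
  qed
qed

lemma L1_borel: "f \<in> L1 M \<Longrightarrow> f \<in> borel_measurable M"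
  unfolding L1_def using sm_borel by blast

lemma L1_iff: "f \<in> L1 M \<longleftrightarrow> strongly_measurable M f \<and> integrable M (\<lambda>\<omega>. norm (f \<omega>))"
proof -
  have "integrable M (\<lambda>\<omega>. norm (f \<omega>)) \<longleftrightarrow> (\<integral>\<^sup>+ \<omega>. ennreal (norm (f \<omega>)) \<partial>M) < \<infinity>"
    if "strongly_measurable M f"
    using sm_borel[OF that] by (simp add: integrable_iff_bounded)
  then show ?thesis unfolding L1_def by blast
qed

lemma L1_int: "f \<in> L1 M \<Longrightarrow> integrable M (\<lambda>\<omega>. norm (f \<omega>))"
  using L1_iff by blast

lemma L1_sm: "f \<in> L1 M \<Longrightarrow> strongly_measurable M f"
  using L1_iff by blast

lemma L1norm_eq: "f \<in> L1 M \<Longrightarrow> L1norm M f = (\<integral>\<omega>. norm (f \<omega>) \<partial>M)"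
  unfolding L1norm_def using L1_borel[of f]
  by (intro enn2real_nn_integral_eq_integral) auto

lemma L1I:
  assumes "strongly_measurable M f" "integrable M g" "AE \<omega> in M. norm (f \<omega>) \<le> g \<omega>"
  shows "f \<in> L1 M"
proof -
  have "integrable M (\<lambda>\<omega>. norm (f \<omega>))"
  proof (rule Bochner_Integration.integrable_bound[OF assms(2)])
    show "(\<lambda>\<omega>. norm (f \<omega>)) \<in> borel_measurable M"
      using sm_borel[OF assms(1)] by (rule measurable_compose[OF _ borel_measurable_norm])
    show "AE \<omega> in M. norm (norm (f \<omega>)) \<le> norm (g \<omega>)"
      using assms(3) by eventually_elim auto
  qed
  then show ?thesis using assms(1) unfolding L1_iff by blast
qed

lemma L1_add:
  assumes f: "f \<in> L1 M" and g: "g \<in> L1 M" shows "(\<lambda>\<omega>. f \<omega> + g \<omega>) \<in> L1 M"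
proof (rule L1I)
  show "strongly_measurable M (\<lambda>\<omega>. f \<omega> + g \<omega>)" by (rule sm_add[OF L1_sm[OF f] L1_sm[OF g]])
  show "integrable M (\<lambda>\<omega>. norm (f \<omega>) + norm (g \<omega>))" using L1_int[OF f] L1_int[OF g] by simp
  show "AE \<omega> in M. norm (f \<omega> + g \<omega>) \<le> norm (f \<omega>) + norm (g \<omega>)"
    by (intro AE_I2 norm_triangle_ineq)
qed

lemma L1_scale:
  assumes f: "f \<in> L1 M" shows "(\<lambda>\<omega>. c *\<^sub>R f \<omega>) \<in> L1 M"
proof (rule L1I)
  show "strongly_measurable M (\<lambda>\<omega>. c *\<^sub>R f \<omega>)" by (rule sm_scale[OF L1_sm[OF f]])
  show "integrable M (\<lambda>\<omega>. \<bar>c\<bar> * norm (f \<omega>))" using L1_int[OF f] by simp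
  show "AE \<omega> in M. norm (c *\<^sub>R f \<omega>) \<le> \<bar>c\<bar> * norm (f \<omega>)"
    by (intro AE_I2) simp
qed

lemma L1_diff: "f \<in> L1 M \<Longrightarrow> g \<in> L1 M \<Longrightarrow> (\<lambda>\<omega>. f \<omega> - g \<omega>) \<in> L1 M"
  using L1_add[OF _ L1_scale[of g "-1"], of f] by simp

lemma L1_rst:
  assumes f: "f \<in> L1 M" and E: "E \<in> sets M" shows "rst E f \<in> L1 M"
proof (rule L1I)
  show "strongly_measurable M (rst E f)" by (rule sm_ind[OF L1_sm[OF f] E])
  show "integrable M (\<lambda>\<omega>. norm (f \<omega>))" using L1_int[OF f] .
  show "AE \<omega> in M. norm (rst E f \<omega>) \<le> norm (f \<omega>)"
    by (intro AE_I2) (simp add: rst_def indicator_def)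
qed

lemma L1_cong: "f \<in> L1 M \<Longrightarrow> L1eq M g f \<Longrightarrow> g \<in> L1 M"
  unfolding L1eq_def
  by (rule L1I[where g="\<lambda>\<omega>. norm (f \<omega>)"])
     (auto intro!: L1_int elim!: sm_cong[OF L1_sm] eventually_mono)

lemma L1_zero: "(\<lambda>\<omega>. 0) \<in> L1 M"
  by (rule L1I[where g="\<lambda>\<omega>. 0"]) (auto intro: sm_simple)

lemma L1norm_nonneg: "0 \<le> L1norm M f"
  unfolding L1norm_def by simp

lemma L1norm_add_le:
  assumes f: "f \<in> L1 M" and g: "g \<in> L1 M"
  shows "L1norm M (\<lambda>\<omega>. f \<omega> + g \<omega>) \<le> L1norm M f + L1norm M g"
proof -
  have "(\<integral>\<omega>. norm (f \<omega> + g \<omega>) \<partial>M) \<le> (\<integral>\<omega>. norm (f \<omega>) + norm (g \<omega>) \<partial>M)"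
    by (rule integral_mono) (auto intro!: L1_int L1_add f g norm_triangle_ineq)
  also have "\<dots> = (\<integral>\<omega>. norm (f \<omega>) \<partial>M) + (\<integral>\<omega>. norm (g \<omega>) \<partial>M)"
    using L1_int[OF f] L1_int[OF g] by simp
  finally show ?thesis by (simp add: L1norm_eq L1_add f g)
qed

lemma L1norm_scale: "f \<in> L1 M \<Longrightarrow> L1norm M (\<lambda>\<omega>. c *\<^sub>R f \<omega>) = \<bar>c\<bar> * L1norm M f"
  by (simp add: L1norm_eq L1_scale)

lemma L1norm_cong:
  assumes f: "f \<in> L1 M" and eq: "L1eq M g f" shows "L1norm M g = L1norm M f"
proof -
  have g: "g \<in> L1 M" by (rule L1_cong[OF f eq])
  have "(\<integral>\<omega>. norm (g \<omega>) \<partial>M) = (\<integral>\<omega>. norm (f \<omega>) \<partial>M)"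
  proof (rule integral_cong_AE)
    show "(\<lambda>\<omega>. norm (g \<omega>)) \<in> borel_measurable M"
      using L1_borel[OF g] by (rule measurable_compose[OF _ borel_measurable_norm])
    show "(\<lambda>\<omega>. norm (f \<omega>)) \<in> borel_measurable M"
      using L1_borel[OF f] by (rule measurable_compose[OF _ borel_measurable_norm])
    show "AE \<omega> in M. norm (g \<omega>) = norm (f \<omega>)"
      using eq unfolding L1eq_def by eventually_elim simp
  qed
  then show ?thesis using L1norm_eq[OF f] L1norm_eq[OF g] by simp
qed

lemma L1norm_rst_le:
  assumes f: "f \<in> L1 M" and E: "E \<in> sets M" shows "L1norm M (rst E f) \<le> L1norm M f"
proof -
  have "(\<integral>\<omega>. norm (rst E f \<omega>) \<partial>M) \<le> (\<integral>\<omega>. norm (f \<omega>) \<partial>M)"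
    by (rule integral_mono[OF L1_int[OF L1_rst[OF f E]] L1_int[OF f]]) (simp add: rst_def indicator_def)
  then show ?thesis using L1norm_eq[OF f] L1norm_eq[OF L1_rst[OF f E]] by simp
qed

lemma L1norm_zero_AE: "f \<in> L1 M \<Longrightarrow> L1norm M f = 0 \<Longrightarrow> AE \<omega> in M. f \<omega> = 0"
  by (simp add: L1norm_eq integral_nonneg_eq_0_iff_AE L1_int)

lemma L1norm_AE_zero: "AE \<omega> in M. f \<omega> = 0 \<Longrightarrow> L1norm M f = 0"
proof -
  assume "AE \<omega> in M. f \<omega> = 0"
  then have "(\<integral>\<^sup>+ \<omega>. ennreal (norm (f \<omega>)) \<partial>M) = (\<integral>\<^sup>+ \<omega>. 0 \<partial>M)"
    by (intro nn_integral_cong_AE) (auto elim: eventually_mono)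
  then show ?thesis unfolding L1norm_def by simp
qed

lemma L1norm_split3:
  assumes f: "f \<in> L1 M" and A: "A \<in> sets M" and B: "B \<in> sets M" and AB: "A \<inter> B = {}"
  shows "L1norm M f = L1norm M (rst A f) + L1norm M (rst B f) + L1norm M (rst (space M - A - B) f)"
proof -
  have E: "space M - A - B \<in> sets M" using A B by auto
  have "L1norm M f = (\<integral>\<omega>. norm (rst A f \<omega>) + norm (rst B f \<omega>) + norm (rst (space M - A - B) f \<omega>) \<partial>M)"
    unfolding L1norm_eq[OF f] by (rule Bochner_Integration.integral_cong[OF refl]) (use AB in \<open>auto simp: rst_def indicator_def\<close>)
  also have "\<dots> = L1norm M (rst A f) + L1norm M (rst B f) + L1norm M (rst (space M - A - B) f)"
    using L1_rst[OF f A] L1_rst[OF f B] L1_rst[OF f E]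
    by (simp add: L1norm_eq L1_int)
  finally show ?thesis .
qed

lemma L1_sum:
  fixes m :: nat
  assumes "\<And>k. k < m \<Longrightarrow> f k \<in> L1 M"
  shows "(\<lambda>\<omega>. \<Sum>k<m. c k *\<^sub>R f k \<omega>) \<in> L1 M \<and> L1norm M (\<lambda>\<omega>. \<Sum>k<m. c k *\<^sub>R f k \<omega>) \<le> (\<Sum>k<m. \<bar>c k\<bar> * L1norm M (f k))"
  using assms
proof (induction m)
  case 0
  then show ?case using L1_zero by (simp add: L1norm_AE_zero)
next
  case (Suc m)
  then have IH: "(\<lambda>\<omega>. \<Sum>k<m. c k *\<^sub>R f k \<omega>) \<in> L1 M"
    "L1norm M (\<lambda>\<omega>. \<Sum>k<m. c k *\<^sub>R f k \<omega>) \<le> (\<Sum>k<m. \<bar>c k\<bar> * L1norm M (f k))" by auto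
  have fm: "f m \<in> L1 M" using Suc.prems by auto
  have "L1norm M (\<lambda>\<omega>. (\<Sum>k<m. c k *\<^sub>R f k \<omega>) + c m *\<^sub>R f m \<omega>) \<le>
      L1norm M (\<lambda>\<omega>. \<Sum>k<m. c k *\<^sub>R f k \<omega>) + L1norm M (\<lambda>\<omega>. c m *\<^sub>R f m \<omega>)"
    by (rule L1norm_add_le[OF IH(1) L1_scale[OF fm]])
  then show ?case using IH L1_add[OF IH(1) L1_scale[OF fm]] L1norm_scale[OF fm]
    by simp
qed

end


definition wN :: "'a measure \<Rightarrow> (('a \<Rightarrow> 'b::real_normed_vector) \<Rightarrow> real) set \<Rightarrow> real \<Rightarrow> ('a \<Rightarrow> 'b) \<Rightarrow> ('a \<Rightarrow> 'b) set" where
  "wN M F e x = {g \<in> L1ball M. \<forall>\<phi>\<in>F. \<bar>\<phi> g - \<phi> x\<bar> < e}"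

definition wnhds :: "'a measure \<Rightarrow> ('a \<Rightarrow> 'b::real_normed_vector) \<Rightarrow> ('a \<Rightarrow> 'b) filter" where
  "wnhds M x = (INF p \<in> {p. finite (fst p) \<and> fst p \<subseteq> L1dual M \<and> snd p > (0::real)}. principal (wN M (fst p) (snd p) x))"

lemma L1ball_L1: "f \<in> L1ball M \<Longrightarrow> f \<in> L1 M" unfolding L1ball_def by blast
lemma L1ball_norm: "f \<in> L1ball M \<Longrightarrow> L1norm M f \<le> 1" unfolding L1ball_def by blast
lemma L1sphere_L1: "f \<in> L1sphere M \<Longrightarrow> f \<in> L1 M" unfolding L1sphere_def by blast
lemma L1sphere_norm: "f \<in> L1sphere M \<Longrightarrow> L1norm M f = 1" unfolding L1sphere_def by blast

lemma L1norm_nonneg': "0 \<le> L1norm M f"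
  unfolding L1norm_def by simp

lemma dual_add: "\<phi> \<in> L1dual M \<Longrightarrow> f \<in> L1 M \<Longrightarrow> g \<in> L1 M \<Longrightarrow> \<phi> (\<lambda>\<omega>. f \<omega> + g \<omega>) = \<phi> f + \<phi> g"
  unfolding L1dual_def by blast

lemma dual_scale: "\<phi> \<in> L1dual M \<Longrightarrow> f \<in> L1 M \<Longrightarrow> \<phi> (\<lambda>\<omega>. c *\<^sub>R f \<omega>) = c * \<phi> f"
  unfolding L1dual_def by blast

lemma dual_bound: "\<phi> \<in> L1dual M \<Longrightarrow> \<exists>C\<ge>0. \<forall>f\<in>L1 M. \<bar>\<phi> f\<bar> \<le> C * L1norm M f"
proof -
  assume "\<phi> \<in> L1dual M"
  then obtain C where C: "\<forall>f\<in>L1 M. \<bar>\<phi> f\<bar> \<le> C * L1norm M f" unfolding L1dual_def by blast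
  have "\<bar>\<phi> f\<bar> \<le> max C 0 * L1norm M f" if "f \<in> L1 M" for f :: "'a \<Rightarrow> 'b"
    using C that L1norm_nonneg'[of M f] by (smt (verit) max_def mult_right_mono)
  then show ?thesis by (intro exI[of _ "max C 0"]) auto
qed

lemma dual_finite_bound:
  fixes F :: "(('a \<Rightarrow> 'b::real_normed_vector) \<Rightarrow> real) set"
  assumes "finite F" "F \<subseteq> L1dual M"
  shows "\<exists>C\<ge>0. \<forall>\<phi>\<in>F. \<forall>f\<in>L1 M. \<bar>\<phi> f\<bar> \<le> C * L1norm M f"
  using assms
proof (induction F rule: finite_induct)
  case empty then show ?case by (intro exI[of _ 0]) auto
next
  case (insert \<psi> F)
  then obtain C where C: "C \<ge> 0" "\<forall>\<phi>\<in>F. \<forall>f\<in>L1 M. \<bar>\<phi> f\<bar> \<le> C * L1norm M f" by auto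
  obtain D where D: "D \<ge> 0" "\<forall>f\<in>L1 M. \<bar>\<psi> f\<bar> \<le> D * L1norm M f" using dual_bound insert by blast
  have "\<forall>\<phi>\<in>insert \<psi> F. \<forall>f\<in>L1 M. \<bar>\<phi> f\<bar> \<le> max C D * L1norm M f"
  proof (intro ballI)
    fix \<phi> and f :: "'a \<Rightarrow> 'b" assume "\<phi> \<in> insert \<psi> F" "f \<in> L1 M"
    moreover have "C * L1norm M f \<le> max C D * L1norm M f" "D * L1norm M f \<le> max C D * L1norm M f"
      by (auto intro!: mult_right_mono L1norm_nonneg')
    ultimately show "\<bar>\<phi> f\<bar> \<le> max C D * L1norm M f" using C D by fastforce
  qed
  then show ?case using C by (intro exI[of _ "max C D"]) auto
qed

context
  fixes M :: "'a measure"
  assumes cM: "complete_measure M"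
begin

lemma dual_diff:
  assumes "\<phi> \<in> L1dual M" "f \<in> L1 M" "g \<in> L1 M"
  shows "\<phi> (\<lambda>\<omega>. f \<omega> - g \<omega>) = \<phi> f - \<phi> g"
proof -
  have h: "(\<lambda>\<omega>. f \<omega> - g \<omega>) \<in> L1 M" using L1_diff[OF cM assms(2,3)] .
  have "\<phi> (\<lambda>\<omega>. (f \<omega> - g \<omega>) + g \<omega>) = \<phi> (\<lambda>\<omega>. f \<omega> - g \<omega>) + \<phi> g"
    using dual_add[OF assms(1) h assms(3)] .
  then show ?thesis by simp
qed

lemma dual_lin2:
  assumes "\<phi> \<in> L1dual M" "f \<in> L1 M" "g \<in> L1 M"
  shows "\<phi> (\<lambda>\<omega>. a *\<^sub>R f \<omega> + b *\<^sub>R g \<omega>) = a * \<phi> f + b * \<phi> g"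
  using dual_add[OF assms(1) L1_scale[OF cM assms(2)] L1_scale[OF cM assms(3)]]
    dual_scale[OF assms(1) assms(2)] dual_scale[OF assms(1) assms(3)] by simp

lemma dual_cong:
  assumes "\<phi> \<in> L1dual M" "f \<in> L1 M" "g \<in> L1 M" "L1eq M f g"
  shows "\<phi> f = \<phi> g"
proof -
  obtain C where C: "\<forall>f\<in>L1 M. \<bar>\<phi> f\<bar> \<le> C * L1norm M f" using dual_bound[OF assms(1)] by blast
  have "L1norm M (\<lambda>\<omega>. f \<omega> - g \<omega>) = 0"
    using assms(4) unfolding L1eq_def by (intro L1norm_AE_zero[OF cM]) (auto elim: eventually_mono)
  then have "\<phi> (\<lambda>\<omega>. f \<omega> - g \<omega>) = 0" using C L1_diff[OF cM assms(2,3)] by fastforce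
  then show ?thesis using dual_diff[OF assms(1-3)] by simp
qed

lemma rst_add: "rst E (\<lambda>\<omega>. f \<omega> + g \<omega>) = (\<lambda>\<omega>. rst E f \<omega> + rst E g \<omega>)"
  unfolding rst_def by (simp add: scaleR_add_right)

lemma rst_scale: "rst E (\<lambda>\<omega>. c *\<^sub>R f \<omega>) = (\<lambda>\<omega>. c *\<^sub>R rst E f \<omega>)"
  unfolding rst_def by (simp add: ac_simps)

lemma dual_rst:
  assumes "\<phi> \<in> L1dual M" "E \<in> sets M"
  shows "(\<lambda>g. \<phi> (rst E g)) \<in> L1dual M"
proof -
  obtain C where C: "C \<ge> 0" "\<forall>f\<in>L1 M. \<bar>\<phi> f\<bar> \<le> C * L1norm M f" using dual_bound[OF assms(1)] by blast
  have "\<bar>\<phi> (rst E f)\<bar> \<le> C * L1norm M f" if "f \<in> L1 M" for f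
  proof -
    have "\<bar>\<phi> (rst E f)\<bar> \<le> C * L1norm M (rst E f)" using C L1_rst[OF cM that assms(2)] by blast
    also have "\<dots> \<le> C * L1norm M f" using L1norm_rst_le[OF cM that assms(2)] C(1) by (rule mult_left_mono)
    finally show ?thesis .
  qed
  then show ?thesis unfolding L1dual_def
    using dual_add[OF assms(1) L1_rst[OF cM _ assms(2)] L1_rst[OF cM _ assms(2)]]
      dual_scale[OF assms(1) L1_rst[OF cM _ assms(2)]]
    by (auto simp: rst_add rst_scale)
qed

lemma wN_open:
  assumes F: "finite F" "F \<subseteq> L1dual M" and e: "e > 0"
  shows "rel_weak_open M (wN M F e x)"
  unfolding rel_weak_open_def
proof (intro conjI ballI)
  show "wN M F e x \<subseteq> L1ball M" unfolding wN_def by blast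
  fix g assume g: "g \<in> wN M F e x"
  define d where "d = Max (insert 0 ((\<lambda>\<phi>. \<bar>\<phi> g - \<phi> x\<bar>) ` F))"
  have dfin: "finite (insert 0 ((\<lambda>\<phi>. \<bar>\<phi> g - \<phi> x\<bar>) ` F))" using F by simp
  have dle: "\<bar>\<phi> g - \<phi> x\<bar> \<le> d" if "\<phi> \<in> F" for \<phi>
    unfolding d_def using that dfin by (intro Max_ge) auto
  have "d \<in> insert 0 ((\<lambda>\<phi>. \<bar>\<phi> g - \<phi> x\<bar>) ` F)" unfolding d_def using dfin by (intro Max_in) auto
  then have dlt: "d < e" using g e unfolding wN_def by auto
  have "{h \<in> L1ball M. \<forall>\<phi>\<in>F. \<bar>\<phi> h - \<phi> g\<bar> < e - d} \<subseteq> wN M F e x"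
  proof
    fix h assume h: "h \<in> {h \<in> L1ball M. \<forall>\<phi>\<in>F. \<bar>\<phi> h - \<phi> g\<bar> < e - d}"
    have "\<bar>\<phi> h - \<phi> x\<bar> < e" if "\<phi> \<in> F" for \<phi>
      using h that dle[OF that] by auto
    then show "h \<in> wN M F e x" using h unfolding wN_def by auto
  qed
  then show "\<exists>F' e'. finite F' \<and> F' \<subseteq> L1dual M \<and> e' > 0 \<and>
        {h \<in> L1ball M. \<forall>\<phi>\<in>F'. \<bar>\<phi> h - \<phi> g\<bar> < e'} \<subseteq> wN M F e x"
    using F dlt by (intro exI[of _ F] exI[of _ "e - d"]) auto
qed

lemma wN_mem: "x \<in> L1ball M \<Longrightarrow> e > 0 \<Longrightarrow> x \<in> wN M F e x"
  unfolding wN_def by auto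

lemma open_sat:
  assumes U: "rel_weak_open M U" shows "L1saturated M U"
  unfolding L1saturated_def
proof (intro ballI impI)
  fix f g assume f: "f \<in> U" and g: "g \<in> L1 M" and eq: "L1eq M g f"
  obtain F e where Fe: "finite F" "F \<subseteq> L1dual M" "e > 0" "{h \<in> L1ball M. \<forall>\<phi>\<in>F. \<bar>\<phi> h - \<phi> f\<bar> < e} \<subseteq> U"
    using U f unfolding rel_weak_open_def by blast
  have fb: "f \<in> L1ball M" using U f unfolding rel_weak_open_def by blast
  have "L1norm M g = L1norm M f" using L1norm_cong[OF cM L1ball_L1[OF fb] eq] .
  then have gb: "g \<in> L1ball M" using fb g unfolding L1ball_def by auto
  have "\<phi> g = \<phi> f" if "\<phi> \<in> F" for \<phi>
    using dual_cong[of \<phi> g f] that Fe(2) g L1ball_L1[OF fb] eq by blast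
  then have "\<forall>\<phi>\<in>F. \<bar>\<phi> g - \<phi> f\<bar> < e" using Fe(3) by (metis abs_zero diff_self)
  then have "g \<in> {h \<in> L1ball M. \<forall>\<phi>\<in>F. \<bar>\<phi> h - \<phi> f\<bar> < e}" using gb by blast
  then show "g \<in> U" using Fe(4) by blast
qed

lemma open_nhd: "rel_weak_open M U \<Longrightarrow> x \<in> U \<Longrightarrow> rel_weak_nhd M U x"
  unfolding rel_weak_nhd_def rel_weak_open_def by blast

lemma eventually_wnhds:
  fixes x :: "'a \<Rightarrow> 'b::real_normed_vector"
  shows "eventually P (wnhds M x) \<longleftrightarrow> (\<exists>F e. finite F \<and> F \<subseteq> L1dual M \<and> e > 0 \<and> (\<forall>g\<in>wN M F e x. P g))"
proof -
  define I where "I = {p. finite (fst p) \<and> fst p \<subseteq> (L1dual M :: (('a \<Rightarrow> 'b) \<Rightarrow> real) set) \<and> snd p > (0::real)}"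
  have "eventually P (wnhds M x) \<longleftrightarrow> (\<exists>p\<in>I. eventually P (principal (wN M (fst p) (snd p) x)))"
    unfolding wnhds_def I_def[symmetric]
  proof (rule eventually_INF_base)
    have "({}, 1) \<in> I" unfolding I_def by simp
    then show "I \<noteq> {}" by blast
    fix a b assume a: "a \<in> I" and b: "b \<in> I"
    show "\<exists>c\<in>I. principal (wN M (fst c) (snd c) x) \<le> inf (principal (wN M (fst a) (snd a) x)) (principal (wN M (fst b) (snd b) x))"
      using a b unfolding I_def
      by (intro bexI[of _ "(fst a \<union> fst b, min (snd a) (snd b))"]) (auto simp: wN_def)
  qed
  then show ?thesis by (auto simp: eventually_principal I_def)
qed

lemma wnhds_ball: "eventually (\<lambda>g. g \<in> L1ball M) (wnhds M x)"
  unfolding eventually_wnhds by (intro exI[of _ "{}"] exI[of _ 1]) (auto simp: wN_def)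

lemma tendsto_dual: "\<phi> \<in> L1dual M \<Longrightarrow> ((\<lambda>g. \<phi> g) \<longlongrightarrow> \<phi> x) (wnhds M x)"
proof (rule tendstoI)
  fix \<epsilon> :: real assume "\<phi> \<in> L1dual M" "\<epsilon> > 0"
  then show "eventually (\<lambda>g. dist (\<phi> g) (\<phi> x) < \<epsilon>) (wnhds M x)"
    unfolding eventually_wnhds
    by (intro exI[of _ "{\<phi>}"] exI[of _ \<epsilon>]) (auto simp: wN_def dist_real_def)
qed

lemma wnhds_open_set:
  assumes "x \<in> L1ball M" "eventually P (wnhds M x)"
  shows "\<exists>G. rel_weak_open M G \<and> x \<in> G \<and> G \<subseteq> {g. P g}"
proof -
  obtain F e where "finite F" "F \<subseteq> L1dual M" "e > 0" "\<forall>g\<in>wN M F e x. P g"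
    using assms(2) unfolding eventually_wnhds by blast
  then show ?thesis using wN_open wN_mem[OF assms(1)] by blast
qed

end


context
  fixes M :: "'a measure"
  assumes cM: "complete_measure M"
begin

lemma simple_approx:
  fixes f :: "'a \<Rightarrow> 'b::real_normed_vector"
  assumes f: "f \<in> L1 M" and d: "\<delta> > 0"
  shows "\<exists>s. simple_function M s \<and> s \<in> L1 M \<and> L1norm M (\<lambda>\<omega>. f \<omega> - s \<omega>) < \<delta>"
proof -
  obtain t where t: "\<And>n. simple_function M (t n)" "AE \<omega> in M. (\<lambda>n. t n \<omega>) \<longlonglongrightarrow> f \<omega>"
    using L1_sm[OF cM f] unfolding strongly_measurable_def by blast
  have fm[measurable]: "f \<in> borel_measurable M" by (rule L1_borel[OF cM f])
  have tm[measurable]: "t n \<in> borel_measurable M" for n by (rule borel_measurable_simple_function[OF t(1)])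
  define t' where "t' n \<omega> = (if norm (t n \<omega>) \<le> 2 * norm (f \<omega>) then t n \<omega> else 0)" for n \<omega>
  have t's: "simple_function M (t' n)" for n
    unfolding t'_def
  proof (rule simple_function_If[OF t(1)])
    show "simple_function M (\<lambda>\<omega>. 0::'b)" by simp
    show "{\<omega> \<in> space M. norm (t n \<omega>) \<le> 2 * norm (f \<omega>)} \<in> sets M" by measurable
  qed
  have t'm[measurable]: "t' n \<in> borel_measurable M" for n by (rule borel_measurable_simple_function[OF t's])
  have t'b: "norm (t' n \<omega>) \<le> 2 * norm (f \<omega>)" for n \<omega> unfolding t'_def by auto
  have conv: "AE \<omega> in M. (\<lambda>n. t' n \<omega>) \<longlonglongrightarrow> f \<omega>"
    using t(2)
  proof eventually_elim
    fix \<omega> assume tn: "(\<lambda>n. t n \<omega>) \<longlonglongrightarrow> f \<omega>"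
    show "(\<lambda>n. t' n \<omega>) \<longlonglongrightarrow> f \<omega>"
    proof (cases "f \<omega> = 0")
      case True
      then have "t' n \<omega> = 0" for n unfolding t'_def by auto
      then show ?thesis using True by simp
    next
      case False
      then have "norm (f \<omega>) < 2 * norm (f \<omega>)" by simp
      from order_tendstoD(2)[OF tendsto_norm[OF tn] this]
      have "eventually (\<lambda>n. t n \<omega> = t' n \<omega>) sequentially"
        by eventually_elim (auto simp: t'_def)
      then have "((\<lambda>n. t n \<omega>) \<longlongrightarrow> f \<omega>) sequentially \<longleftrightarrow> ((\<lambda>n. t' n \<omega>) \<longlongrightarrow> f \<omega>) sequentially"
        by (rule tendsto_cong)
      with tn show ?thesis by simp
    qed
  qed
  have fin: "(\<integral>\<^sup>+ \<omega>. ennreal (norm (f \<omega>)) \<partial>M) < \<infinity>" using f unfolding L1_def by blast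
  have lim: "(\<lambda>i. \<integral>\<^sup>+ \<omega>. ennreal (norm (t' i \<omega> - f \<omega>)) \<partial>M) \<longlonglongrightarrow> (\<integral>\<^sup>+ \<omega>. 0 \<partial>M)"
  proof (rule nn_integral_dominated_convergence[where w="\<lambda>\<omega>. ennreal (3 * norm (f \<omega>))"])
    show "(\<lambda>\<omega>. ennreal (norm (t' i \<omega> - f \<omega>))) \<in> borel_measurable M" for i
    proof -
      have "strongly_measurable M (\<lambda>\<omega>. t' i \<omega> + (-1) *\<^sub>R f \<omega>)"
        by (rule sm_add[OF sm_simple[OF t's] sm_scale[OF L1_sm[OF cM f]]])
      then have "strongly_measurable M (\<lambda>\<omega>. t' i \<omega> - f \<omega>)" by simp
      then have hm: "(\<lambda>\<omega>. t' i \<omega> - f \<omega>) \<in> borel_measurable M" by (rule sm_borel[OF cM])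
      show ?thesis by (rule measurable_compose[OF measurable_compose[OF hm borel_measurable_norm] measurable_ennreal])
    qed
    show "(\<lambda>\<omega>. 0::ennreal) \<in> borel_measurable M" by simp
    show "(\<lambda>\<omega>. ennreal (3 * norm (f \<omega>))) \<in> borel_measurable M" by measurable
    show "AE \<omega> in M. ennreal (norm (t' j \<omega> - f \<omega>)) \<le> ennreal (3 * norm (f \<omega>))" for j
    proof (intro AE_I2 ennreal_leI)
      fix \<omega>
      have "norm (t' j \<omega> - f \<omega>) \<le> norm (t' j \<omega>) + norm (f \<omega>)" by (rule norm_triangle_ineq4)
      then show "norm (t' j \<omega> - f \<omega>) \<le> 3 * norm (f \<omega>)" using t'b[of j \<omega>] by simp
    qed
    have "(\<integral>\<^sup>+ \<omega>. ennreal (3 * norm (f \<omega>)) \<partial>M) = 3 * (\<integral>\<^sup>+ \<omega>. ennreal (norm (f \<omega>)) \<partial>M)"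
      by (simp add: ennreal_mult nn_integral_cmult)
    then show "(\<integral>\<^sup>+ \<omega>. ennreal (3 * norm (f \<omega>)) \<partial>M) < \<infinity>"
      using fin by (simp add: ennreal_mult_less_top)
    show "AE \<omega> in M. (\<lambda>i. ennreal (norm (t' i \<omega> - f \<omega>))) \<longlonglongrightarrow> 0"
      using conv
    proof eventually_elim
      fix \<omega> assume "(\<lambda>n. t' n \<omega>) \<longlonglongrightarrow> f \<omega>"
      then have "(\<lambda>n. norm (t' n \<omega> - f \<omega>)) \<longlonglongrightarrow> norm (f \<omega> - f \<omega>)"
        by (intro tendsto_intros)
      then show "(\<lambda>i. ennreal (norm (t' i \<omega> - f \<omega>))) \<longlonglongrightarrow> 0"
        using tendsto_ennrealI by fastforce
    qed
  qed
  have "0 < ennreal \<delta>" using d by simp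
  from order_tendstoD(2)[OF lim[simplified] this]
  obtain n where n: "(\<integral>\<^sup>+ \<omega>. ennreal (norm (t' n \<omega> - f \<omega>)) \<partial>M) < ennreal \<delta>"
    by (auto simp: eventually_sequentially)
  have "L1norm M (\<lambda>\<omega>. f \<omega> - t' n \<omega>) = enn2real (\<integral>\<^sup>+ \<omega>. ennreal (norm (t' n \<omega> - f \<omega>)) \<partial>M)"
    unfolding L1norm_def by (simp add: norm_minus_commute)
  also have "\<dots> < \<delta>"
  proof -
    have "(\<integral>\<^sup>+ \<omega>. ennreal (norm (t' n \<omega> - f \<omega>)) \<partial>M) < top"
      using n ennreal_less_top less_trans by blast
    then show ?thesis using n by simp
  qed
  finally have "L1norm M (\<lambda>\<omega>. f \<omega> - t' n \<omega>) < \<delta>" .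
  moreover have "t' n \<in> L1 M"
  proof (rule L1I[OF cM])
    show "strongly_measurable M (t' n)" by (rule sm_simple[OF t's])
    show "integrable M (\<lambda>\<omega>. 2 * norm (f \<omega>))" using L1_int[OF cM f] by simp
    show "AE \<omega> in M. norm (t' n \<omega>) \<le> 2 * norm (f \<omega>)" using t'b by simp
  qed
  ultimately show ?thesis using t's by blast
qed

end

definition Psi :: "'b::real_normed_vector \<Rightarrow> 'b \<Rightarrow> real" where
  "Psi c = (SOME \<psi>. linear \<psi> \<and> (\<forall>y. \<bar>\<psi> y\<bar> \<le> norm y) \<and> \<psi> c = norm c)"

lemma Psi: "linear (Psi c)" "\<bar>Psi c y\<bar> \<le> norm y" "Psi c c = norm c"
proof -
  have "linear (Psi c) \<and> (\<forall>y. \<bar>Psi c y\<bar> \<le> norm y) \<and> Psi c c = norm c"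
    unfolding Psi_def by (rule someI_ex[OF hahn_banach_norming])
  then show "linear (Psi c)" "\<bar>Psi c y\<bar> \<le> norm y" "Psi c c = norm c" by auto
qed

lemma Psi_add: "Psi c (x + y) = Psi c x + Psi c y" using Psi(1) by (rule linear_add)
lemma Psi_scale: "Psi c (r *\<^sub>R x) = r * Psi c x" using linear_scale[OF Psi(1)] by simp
lemma Psi_diff: "Psi c (x - y) = Psi c x - Psi c y" using Psi(1) by (rule linear_diff)

lemma Psi_bl: "bounded_linear (Psi c)"
  by (rule bounded_linear_intro[where K=1]) (auto simp: Psi_add Psi_scale Psi(2))

lemma Psi_meas: "g \<in> borel_measurable M \<Longrightarrow> (\<lambda>\<omega>. Psi c (g \<omega>)) \<in> borel_measurable M"
  by (rule borel_measurable_continuous_on[OF linear_continuous_on[OF Psi_bl]])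

lemma simple_Psi_meas:
  assumes s: "simple_function M s" and g: "g \<in> borel_measurable M"
  shows "(\<lambda>\<omega>. Psi (s \<omega>) (g \<omega>)) \<in> borel_measurable M"
proof -
  have eq: "Psi (s \<omega>) (g \<omega>) = (\<Sum>c\<in>s ` space M. indicator (s -` {c} \<inter> space M) \<omega> * Psi c (g \<omega>))"
    if "\<omega> \<in> space M" for \<omega>
  proof -
    have "(\<Sum>c\<in>s ` space M. indicator (s -` {c} \<inter> space M) \<omega> * Psi c (g \<omega>)) =
        (\<Sum>c\<in>s ` space M. if s \<omega> = c then Psi c (g \<omega>) else 0)"
      using that by (intro sum.cong) (auto simp: indicator_def)
    also have "\<dots> = Psi (s \<omega>) (g \<omega>)"
      using that simple_functionD(1)[OF s] by (subst sum.delta') auto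
    finally show ?thesis by simp
  qed
  have sm: "(\<lambda>\<omega>. \<Sum>c\<in>s ` space M. indicator (s -` {c} \<inter> space M) \<omega> * Psi c (g \<omega>)) \<in> borel_measurable M"
  proof (rule borel_measurable_sum)
    fix c assume "c \<in> s ` space M"
    have "s -` {c} \<inter> space M \<in> sets M" using simple_functionD(2)[OF s] by auto
    then show "(\<lambda>\<omega>. indicator (s -` {c} \<inter> space M) \<omega> * Psi c (g \<omega>)) \<in> borel_measurable M"
      using Psi_meas[OF g] by (intro borel_measurable_times) auto
  qed
  have "(\<lambda>\<omega>. Psi (s \<omega>) (g \<omega>)) \<in> borel_measurable M \<longleftrightarrow>
     (\<lambda>\<omega>. \<Sum>c\<in>s ` space M. indicator (s -` {c} \<inter> space M) \<omega> * Psi c (g \<omega>)) \<in> borel_measurable M"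
    by (rule measurable_cong) (rule eq)
  then show ?thesis using sm by blast
qed

context
  fixes M :: "'a measure"
  assumes cM: "complete_measure M"
begin

lemma lsc_functional:
  fixes x :: "'a \<Rightarrow> 'b::real_normed_vector"
  assumes x: "x \<in> L1 M" and E: "E \<in> sets M" and d: "\<delta> > 0"
  shows "\<exists>\<phi>\<in>L1dual M. (\<forall>g\<in>L1 M. \<phi> g \<le> L1norm M (rst E g)) \<and> L1norm M (rst E x) - \<delta> < \<phi> x"
proof -
  define f where "f = rst E x"
  have f: "f \<in> L1 M" unfolding f_def by (rule L1_rst[OF cM x E])
  obtain s where s: "simple_function M s" "s \<in> L1 M" "L1norm M (\<lambda>\<omega>. f \<omega> - s \<omega>) < \<delta>/2"
    using simple_approx[OF cM f, of "\<delta>/2"] d by auto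
  define H where "H \<omega> y = indicator E \<omega> * Psi (s \<omega>) y" for \<omega> y
  define \<phi> where "\<phi> g = (\<integral>\<omega>. H \<omega> (g \<omega>) \<partial>M)" for g
  have Hm: "(\<lambda>\<omega>. H \<omega> (g \<omega>)) \<in> borel_measurable M" if "g \<in> L1 M" for g
    unfolding H_def using simple_Psi_meas[OF s(1) L1_borel[OF cM that]] E
    by (intro borel_measurable_times) auto
  have Hb: "\<bar>H \<omega> y\<bar> \<le> indicator E \<omega> * norm y" for \<omega> y
    unfolding H_def using Psi(2)[of "s \<omega>" y] by (auto simp: indicator_def)
  have Hb1: "\<bar>H \<omega> y\<bar> \<le> norm y" for \<omega> y
    using Hb[of \<omega> y] by (cases "\<omega> \<in> E") auto
  have Hle: "H \<omega> y \<le> norm (indicator E \<omega> *\<^sub>R y)" for \<omega> y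
    using Hb[of \<omega> y] by (cases "\<omega> \<in> E") auto
  have Hi: "integrable M (\<lambda>\<omega>. H \<omega> (g \<omega>))" if "g \<in> L1 M" for g
  proof (rule Bochner_Integration.integrable_bound[OF L1_int[OF cM that] Hm[OF that]])
    show "AE \<omega> in M. norm (H \<omega> (g \<omega>)) \<le> norm (norm (g \<omega>))"
      using Hb1 by (intro AE_I2) simp
  qed
  have Hadd: "H \<omega> (a + b) = H \<omega> a + H \<omega> b" for \<omega> a b unfolding H_def by (simp add: Psi_add algebra_simps)
  have Hscale: "H \<omega> (c *\<^sub>R a) = c * H \<omega> a" for \<omega> a c unfolding H_def by (simp add: Psi_scale)
  have phile: "\<phi> g \<le> L1norm M (rst E g)" if g: "g \<in> L1 M" for g
  proof -
    have "\<phi> g \<le> (\<integral>\<omega>. norm (rst E g \<omega>) \<partial>M)"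
      unfolding \<phi>_def by (rule integral_mono[OF Hi[OF g] L1_int[OF cM L1_rst[OF cM g E]]]) (simp add: rst_def, metis Hb abs_le_D1)
    then show ?thesis using L1norm_eq[OF cM L1_rst[OF cM g E]] by simp
  qed
  have "\<phi> \<in> L1dual M" unfolding L1dual_def
  proof (intro CollectI conjI ballI allI exI[of _ 1])
    fix f g :: "'a \<Rightarrow> 'b" assume "f \<in> L1 M" "g \<in> L1 M"
    then show "\<phi> (\<lambda>\<omega>. f \<omega> + g \<omega>) = \<phi> f + \<phi> g" unfolding \<phi>_def Hadd using Hi by simp
  next
    fix f :: "'a \<Rightarrow> 'b" and c :: real assume "f \<in> L1 M"
    then show "\<phi> (\<lambda>\<omega>. c *\<^sub>R f \<omega>) = c * \<phi> f" unfolding \<phi>_def Hscale by simp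
  next
    fix g :: "'a \<Rightarrow> 'b" assume g: "g \<in> L1 M"
    have "\<bar>\<phi> g\<bar> \<le> (\<integral>\<omega>. \<bar>H \<omega> (g \<omega>)\<bar> \<partial>M)" unfolding \<phi>_def by (rule integral_abs_bound)
    also have "\<dots> \<le> (\<integral>\<omega>. norm (g \<omega>) \<partial>M)"
      using Hi[OF g] L1_int[OF cM g] Hb1 by (intro integral_mono) auto
    finally show "\<bar>\<phi> g\<bar> \<le> 1 * L1norm M g" using L1norm_eq[OF cM g] by simp
  qed
  moreover have "L1norm M f - \<delta> < \<phi> x"
  proof -
    have pt: "norm (f \<omega>) - 2 * norm (f \<omega> - s \<omega>) \<le> H \<omega> (x \<omega>)" for \<omega>
    proof -
      have "H \<omega> (x \<omega>) = Psi (s \<omega>) (f \<omega>)" unfolding H_def f_def rst_def by (simp add: Psi_scale)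
      also have "\<dots> = Psi (s \<omega>) (s \<omega>) + Psi (s \<omega>) (f \<omega> - s \<omega>)" by (simp add: Psi_diff)
      also have "\<dots> \<ge> norm (s \<omega>) - norm (f \<omega> - s \<omega>)" using Psi(3)[of "s \<omega>"] Psi(2)[of "s \<omega>" "f \<omega> - s \<omega>"] by linarith
      finally show ?thesis using norm_triangle_ineq2[of "f \<omega>" "s \<omega>"] by linarith
    qed
    have i1: "integrable M (\<lambda>\<omega>. norm (f \<omega>) - 2 * norm (f \<omega> - s \<omega>))"
      using L1_int[OF cM f] L1_int[OF cM L1_diff[OF cM f s(2)]] by simp
    have "(\<integral>\<omega>. norm (f \<omega>) - 2 * norm (f \<omega> - s \<omega>) \<partial>M) \<le> \<phi> x"
      unfolding \<phi>_def by (rule integral_mono[OF i1 Hi[OF x]]) (rule pt)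
    moreover have "(\<integral>\<omega>. norm (f \<omega>) - 2 * norm (f \<omega> - s \<omega>) \<partial>M) = L1norm M f - 2 * L1norm M (\<lambda>\<omega>. f \<omega> - s \<omega>)"
      using L1_int[OF cM f] L1_int[OF cM L1_diff[OF cM f s(2)]]
      by (simp add: L1norm_eq[OF cM f] L1norm_eq[OF cM L1_diff[OF cM f s(2)]])
    ultimately show ?thesis using s(3) by linarith
  qed
  ultimately show ?thesis using phile unfolding f_def by blast
qed

lemma lsc_eventually:
  fixes x :: "'a \<Rightarrow> 'b::real_normed_vector"
  assumes x: "x \<in> L1 M" and E: "E \<in> sets M" and d: "\<delta> > 0"
  shows "eventually (\<lambda>g. L1norm M (rst E x) - \<delta> < L1norm M (rst E g)) (wnhds M x)"
proof -
  obtain \<phi> where \<phi>: "\<phi> \<in> L1dual M" "\<forall>g\<in>L1 M. \<phi> g \<le> L1norm M (rst E g)" "L1norm M (rst E x) - \<delta>/2 < \<phi> x"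
    using lsc_functional[OF x E, of "\<delta>/2"] d by auto
  have "eventually (\<lambda>g. \<phi> x - \<delta>/2 < \<phi> g) (wnhds M x)"
    using order_tendstoD(1)[OF tendsto_dual[OF cM \<phi>(1)], of "\<phi> x - \<delta>/2"] d by simp
  then show ?thesis using wnhds_ball[OF cM, of x]
  proof eventually_elim
    fix g assume "\<phi> x - \<delta>/2 < \<phi> g" "g \<in> L1ball M"
    then show "L1norm M (rst E x) - \<delta> < L1norm M (rst E g)" using \<phi>(2,3) L1ball_L1 by fastforce
  qed
qed

lemma tendsto_piece:
  fixes x :: "'a \<Rightarrow> 'b::real_normed_vector"
  assumes x: "x \<in> L1 M" "L1norm M x = 1" and S: "S1 \<in> sets M" "S2 \<in> sets M" "S3 \<in> sets M"
    and split: "\<And>g :: 'a \<Rightarrow> 'b. g \<in> L1 M \<Longrightarrow> L1norm M g = L1norm M (rst S1 g) + L1norm M (rst S2 g) + L1norm M (rst S3 g)"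
  shows "((\<lambda>g. L1norm M (rst S1 g)) \<longlongrightarrow> L1norm M (rst S1 x)) (wnhds M x)"
proof (rule tendstoI)
  fix \<epsilon> :: real assume e: "\<epsilon> > 0"
  have e2: "\<epsilon>/2 > 0" using e by simp
  have xs: "1 = L1norm M (rst S1 x) + L1norm M (rst S2 x) + L1norm M (rst S3 x)" using split[OF x(1)] x(2) by simp
  show "eventually (\<lambda>g. dist (L1norm M (rst S1 g)) (L1norm M (rst S1 x)) < \<epsilon>) (wnhds M x)"
    using wnhds_ball[OF cM, of x] lsc_eventually[OF x(1) S(1) e] lsc_eventually[OF x(1) S(2) e2]
      lsc_eventually[OF x(1) S(3) e2]
  proof eventually_elim
    fix g :: "'a \<Rightarrow> 'b" assume g: "g \<in> L1ball M" "L1norm M (rst S1 x) - \<epsilon> < L1norm M (rst S1 g)"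
      "L1norm M (rst S2 x) - \<epsilon>/2 < L1norm M (rst S2 g)" "L1norm M (rst S3 x) - \<epsilon>/2 < L1norm M (rst S3 g)"
    have "L1norm M g \<le> 1" using g(1) by (rule L1ball_norm)
    moreover have "L1norm M g = L1norm M (rst S1 g) + L1norm M (rst S2 g) + L1norm M (rst S3 g)"
      using split[OF L1ball_L1[OF g(1)]] .
    ultimately show "dist (L1norm M (rst S1 g)) (L1norm M (rst S1 x)) < \<epsilon>"
      using g(2-4) xs unfolding dist_real_def by linarith
  qed
qed

end


lemma sum2: "(\<Sum>k<(2::nat). f k) = f 0 + f 1"
  by (simp add: numeral_2_eq_2)

context
  fixes M :: "'a measure"
  assumes cM: "complete_measure M"
begin

lemma fix_one:
  fixes a0 b0 :: "'a \<Rightarrow> 'b::real_normed_vector"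
  assumes lam: "0 < lam" "lam < 1" and nu: "nu = 1 - lam"
    and a0: "a0 \<in> L1 M" and b0: "b0 \<in> L1 M"
    and na: "L1norm M a0 \<le> ma" and nb: "L1norm M b0 \<le> mb" and mb0: "0 \<le> mb"
    and tot: "lam * ma + nu * mb \<le> 1" and ma1: "ma > 1"
  shows "\<exists>a b. a \<in> L1ball M \<and> b \<in> L1ball M \<and> (\<forall>\<omega>. lam *\<^sub>R a \<omega> + nu *\<^sub>R b \<omega> = lam *\<^sub>R a0 \<omega> + nu *\<^sub>R b0 \<omega>)
     \<and> L1norm M (\<lambda>\<omega>. a \<omega> - a0 \<omega>) \<le> (1 + lam/nu + nu/lam) * (\<bar>ma - 1\<bar> + \<bar>mb - 1\<bar>)
     \<and> L1norm M (\<lambda>\<omega>. b \<omega> - b0 \<omega>) \<le> (1 + lam/nu + nu/lam) * (\<bar>ma - 1\<bar> + \<bar>mb - 1\<bar>)"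
proof -
  have nu0: "nu > 0" using nu lam by simp
  define \<theta> where "\<theta> = 1 / ma"
  have th: "0 < \<theta>" "\<theta> < 1" "\<theta> * ma = 1" using ma1 unfolding \<theta>_def by auto
  define c where "c = lam / nu * (1 - \<theta>)"
  have c0: "c \<ge> 0" unfolding c_def using lam nu0 th by simp
  define a where "a = (\<lambda>\<omega>. \<theta> *\<^sub>R a0 \<omega>)"
  define b where "b = (\<lambda>\<omega>. b0 \<omega> + c *\<^sub>R a0 \<omega>)"
  have aL: "a \<in> L1 M" unfolding a_def by (rule L1_scale[OF cM a0])
  have bL: "b \<in> L1 M" unfolding b_def by (rule L1_add[OF cM b0 L1_scale[OF cM a0]])
  have "L1norm M a = \<theta> * L1norm M a0" unfolding a_def using L1norm_scale[OF cM a0] th by simp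
  also have "\<dots> \<le> \<theta> * ma" using mult_left_mono[OF na, of \<theta>] th by simp
  finally have an: "L1norm M a \<le> 1" using th by simp
  have "L1norm M b \<le> L1norm M b0 + L1norm M (\<lambda>\<omega>. c *\<^sub>R a0 \<omega>)"
    unfolding b_def by (rule L1norm_add_le[OF cM b0 L1_scale[OF cM a0]])
  also have "\<dots> \<le> mb + c * ma" using L1norm_scale[OF cM a0, of c] c0 nb mult_left_mono[OF na c0] by simp
  also have "c * ma = lam / nu * (ma - 1)" unfolding c_def using th by (simp add: algebra_simps)
  also have "mb + lam / nu * (ma - 1) \<le> 1"
  proof -
    have "nu * mb + lam * (ma - 1) = (lam * ma + nu * mb) - lam" by (simp add: algebra_simps)
    then have "nu * mb + lam * (ma - 1) \<le> nu" using tot nu by linarith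
    then have "(nu * mb + lam * (ma - 1)) / nu \<le> 1" using nu0 by simp
    then show ?thesis using nu0 by (simp add: field_simps)
  qed
  finally have bn: "L1norm M b \<le> 1" .
  have id: "lam *\<^sub>R a \<omega> + nu *\<^sub>R b \<omega> = lam *\<^sub>R a0 \<omega> + nu *\<^sub>R b0 \<omega>" for \<omega>
  proof -
    have "nu * c = lam - lam * \<theta>" unfolding c_def using nu0 by (simp add: field_simps)
    then have co: "lam * \<theta> + nu * c = lam" by simp
    have "lam *\<^sub>R a \<omega> + nu *\<^sub>R b \<omega> = (lam * \<theta> + nu * c) *\<^sub>R a0 \<omega> + nu *\<^sub>R b0 \<omega>"
      unfolding a_def b_def by (simp add: scaleR_add_right scaleR_add_left add_ac)
    then show ?thesis using co by simp
  qed
  define K where "K = 1 + lam/nu + nu/lam"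
  have K: "1 \<le> K" "lam / nu \<le> K" unfolding K_def using lam nu0 by auto
  have "L1norm M (\<lambda>\<omega>. a \<omega> - a0 \<omega>) = L1norm M (\<lambda>\<omega>. (\<theta> - 1) *\<^sub>R a0 \<omega>)"
    unfolding a_def by (simp add: algebra_simps)
  also have "\<dots> = (1 - \<theta>) * L1norm M a0" using L1norm_scale[OF cM a0] th by simp
  also have "\<dots> \<le> (1 - \<theta>) * ma" using na th by (simp add: mult_left_mono)
  also have "\<dots> = ma - 1" using th by (simp add: algebra_simps)
  also have "\<dots> \<le> K * (\<bar>ma - 1\<bar> + \<bar>mb - 1\<bar>)"
    using K ma1 by (smt (verit) mult_le_cancel_right1 mult_right_mono abs_ge_zero)
  finally have da: "L1norm M (\<lambda>\<omega>. a \<omega> - a0 \<omega>) \<le> K * (\<bar>ma - 1\<bar> + \<bar>mb - 1\<bar>)" .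
  have "L1norm M (\<lambda>\<omega>. b \<omega> - b0 \<omega>) = L1norm M (\<lambda>\<omega>. c *\<^sub>R a0 \<omega>)"
    unfolding b_def by simp
  also have "\<dots> = c * L1norm M a0" using L1norm_scale[OF cM a0] c0 by simp
  also have "\<dots> \<le> c * ma" using na c0 by (simp add: mult_left_mono)
  also have "\<dots> = lam / nu * (ma - 1)" unfolding c_def using th by (simp add: algebra_simps)
  also have "\<dots> \<le> K * (ma - 1)" using mult_right_mono[OF K(2), of "ma - 1"] ma1 by simp
  also have "\<dots> \<le> K * (\<bar>ma - 1\<bar> + \<bar>mb - 1\<bar>)" using K by (simp add: mult_left_mono)
  finally have db: "L1norm M (\<lambda>\<omega>. b \<omega> - b0 \<omega>) \<le> K * (\<bar>ma - 1\<bar> + \<bar>mb - 1\<bar>)" .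
  show ?thesis using aL bL an bn id da db unfolding K_def L1ball_def by blast
qed

lemma fix_ball:
  fixes a0 b0 :: "'a \<Rightarrow> 'b::real_normed_vector"
  assumes lam: "0 < lam" "lam < 1" and nu: "nu = 1 - lam"
    and a0: "a0 \<in> L1 M" and b0: "b0 \<in> L1 M"
    and na: "L1norm M a0 \<le> ma" and nb: "L1norm M b0 \<le> mb" and ma0: "0 \<le> ma" and mb0: "0 \<le> mb"
    and tot: "lam * ma + nu * mb \<le> 1"
  shows "\<exists>a b. a \<in> L1ball M \<and> b \<in> L1ball M \<and> (\<forall>\<omega>. lam *\<^sub>R a \<omega> + nu *\<^sub>R b \<omega> = lam *\<^sub>R a0 \<omega> + nu *\<^sub>R b0 \<omega>)
     \<and> L1norm M (\<lambda>\<omega>. a \<omega> - a0 \<omega>) \<le> (1 + lam/nu + nu/lam) * (\<bar>ma - 1\<bar> + \<bar>mb - 1\<bar>)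
     \<and> L1norm M (\<lambda>\<omega>. b \<omega> - b0 \<omega>) \<le> (1 + lam/nu + nu/lam) * (\<bar>ma - 1\<bar> + \<bar>mb - 1\<bar>)"
proof -
  have nu0: "nu > 0" using nu lam by simp
  have K0: "0 \<le> (1 + lam/nu + nu/lam) * (\<bar>ma - 1\<bar> + \<bar>mb - 1\<bar>)" using lam nu0 by simp
  consider "ma \<le> 1 \<and> mb \<le> 1" | "ma > 1" | "mb > 1" by linarith
  then show ?thesis
  proof cases
    case 1
    have "a0 \<in> L1ball M" "b0 \<in> L1ball M" using 1 na nb a0 b0 unfolding L1ball_def by auto
    moreover have "L1norm M (\<lambda>\<omega>. a0 \<omega> - a0 \<omega>) = 0" "L1norm M (\<lambda>\<omega>. b0 \<omega> - b0 \<omega>) = 0"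
      by (auto intro!: L1norm_AE_zero[OF cM])
    ultimately show ?thesis using K0 by (intro exI[of _ a0] exI[of _ b0]) auto
  next
    case 2
    then show ?thesis using fix_one[OF lam nu a0 b0 na nb mb0 tot] by blast
  next
    case 3
    have lam': "0 < nu" "nu < 1" "lam = 1 - nu" using lam nu by auto
    have tot': "nu * mb + lam * ma \<le> 1" using tot by simp
    obtain b a where ba: "b \<in> L1ball M" "a \<in> L1ball M" "\<forall>\<omega>. nu *\<^sub>R b \<omega> + lam *\<^sub>R a \<omega> = nu *\<^sub>R b0 \<omega> + lam *\<^sub>R a0 \<omega>"
      "L1norm M (\<lambda>\<omega>. b \<omega> - b0 \<omega>) \<le> (1 + nu/lam + lam/nu) * (\<bar>mb - 1\<bar> + \<bar>ma - 1\<bar>)"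
      "L1norm M (\<lambda>\<omega>. a \<omega> - a0 \<omega>) \<le> (1 + nu/lam + lam/nu) * (\<bar>mb - 1\<bar> + \<bar>ma - 1\<bar>)"
      using fix_one[OF lam' b0 a0 nb na ma0 tot' 3] by blast
    show ?thesis using ba by (intro exI[of _ a] exI[of _ b]) (auto simp: algebra_simps)
  qed
qed

lemma assemble:
  fixes w a0 b0 u v :: "'a \<Rightarrow> 'b::real_normed_vector"
  assumes lam: "0 < lam" "lam < 1" and nu: "nu = 1 - lam"
    and w: "w \<in> L1ball M" and a0: "a0 \<in> L1 M" and b0: "b0 \<in> L1 M"
    and eq: "L1eq M w (\<lambda>\<omega>. lam *\<^sub>R a0 \<omega> + nu *\<^sub>R b0 \<omega>)"
    and na: "L1norm M a0 \<le> ma" and nb: "L1norm M b0 \<le> mb" and ma0: "0 \<le> ma" and mb0: "0 \<le> mb"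
    and tot: "lam * ma + nu * mb \<le> 1"
    and C: "C \<ge> 0" "\<forall>\<phi>\<in>F. \<forall>f\<in>L1 M. \<bar>\<phi> f\<bar> \<le> C * L1norm M f" and F: "F \<subseteq> L1dual M"
    and small: "C * ((1 + lam/nu + nu/lam) * (\<bar>ma - 1\<bar> + \<bar>mb - 1\<bar>)) < e/2"
    and ea: "\<forall>\<phi>\<in>F. \<bar>\<phi> a0 - \<phi> u\<bar> < e/2" and eb: "\<forall>\<phi>\<in>F. \<bar>\<phi> b0 - \<phi> v\<bar> < e/2"
    and U: "wN M F e u \<subseteq> U" and V: "wN M F e v \<subseteq> V"
  shows "w \<in> L1comb M 2 (\<lambda>k. if k = 0 then lam else nu) (\<lambda>k. if k = 0 then U else V)"
proof -
  obtain a b where ab: "a \<in> L1ball M" "b \<in> L1ball M" "\<forall>\<omega>. lam *\<^sub>R a \<omega> + nu *\<^sub>R b \<omega> = lam *\<^sub>R a0 \<omega> + nu *\<^sub>R b0 \<omega>"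
    "L1norm M (\<lambda>\<omega>. a \<omega> - a0 \<omega>) \<le> (1 + lam/nu + nu/lam) * (\<bar>ma - 1\<bar> + \<bar>mb - 1\<bar>)"
    "L1norm M (\<lambda>\<omega>. b \<omega> - b0 \<omega>) \<le> (1 + lam/nu + nu/lam) * (\<bar>ma - 1\<bar> + \<bar>mb - 1\<bar>)"
    using fix_ball[OF lam nu a0 b0 na nb ma0 mb0 tot] by blast
  define D where "D = (1 + lam/nu + nu/lam) * (\<bar>ma - 1\<bar> + \<bar>mb - 1\<bar>)"
  have close: "\<bar>\<phi> c - \<phi> p\<bar> < e"
    if \<phi>: "\<phi> \<in> F" and c: "c \<in> L1ball M" and c0: "c0 \<in> L1 M" and d: "L1norm M (\<lambda>\<omega>. c \<omega> - c0 \<omega>) \<le> D"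
      and e0: "\<bar>\<phi> c0 - \<phi> p\<bar> < e/2" for \<phi> c c0 p
  proof -
    have cL: "c \<in> L1 M" using c by (rule L1ball_L1)
    have "\<bar>\<phi> c - \<phi> c0\<bar> = \<bar>\<phi> (\<lambda>\<omega>. c \<omega> - c0 \<omega>)\<bar>" using dual_diff[OF cM _ cL c0] \<phi> F by auto
    also have "\<dots> \<le> C * L1norm M (\<lambda>\<omega>. c \<omega> - c0 \<omega>)" using C(2) \<phi> L1_diff[OF cM cL c0] by blast
    also have "\<dots> \<le> C * D" using d C(1) by (rule mult_left_mono)
    finally have "\<bar>\<phi> c - \<phi> c0\<bar> < e/2" using small unfolding D_def by linarith
    then show ?thesis using e0 by linarith
  qed
  have "a \<in> U"
  proof -
    have "a \<in> wN M F e u" unfolding wN_def using ab(1) close[OF _ ab(1) a0 ab(4)[folded D_def]] ea by blast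
    then show ?thesis using U by blast
  qed
  moreover have "b \<in> V"
  proof -
    have "b \<in> wN M F e v" unfolding wN_def using ab(2) close[OF _ ab(2) b0 ab(5)[folded D_def]] eb by blast
    then show ?thesis using V by blast
  qed
  moreover have "L1eq M w (\<lambda>\<omega>. \<Sum>k<(2::nat). (if k = 0 then lam else nu) *\<^sub>R (if k = 0 then a else b) \<omega>)"
    using eq ab(3) unfolding L1eq_def sum2 by simp
  ultimately show ?thesis unfolding L1comb_def using L1ball_L1[OF w]
    by (intro CollectI conjI exI[of _ "\<lambda>k. if k = 0 then a else b"]) auto
qed

end


lemma phi_zero:
  assumes cM: "complete_measure M" and \<phi>: "\<phi> \<in> L1dual M" and g: "g \<in> L1 M" and z: "AE \<omega> in M. g \<omega> = 0"
  shows "\<phi> g = 0"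
proof -
  have "\<phi> g = \<phi> (\<lambda>\<omega>. 0 *\<^sub>R g \<omega>)"
    using z by (intro dual_cong[OF cM \<phi> g L1_scale[OF cM g]]) (auto simp: L1eq_def)
  then show ?thesis using dual_scale[OF \<phi> g, of 0] by simp
qed

locale twoset =
  fixes M :: "'a measure" and u v x :: "'a \<Rightarrow> 'b::banach" and lam nu :: real
  assumes cM: "complete_measure M"
    and lam: "0 < lam" "lam < 1" and nu: "nu = 1 - lam"
    and ub: "u \<in> L1ball M" and vb: "v \<in> L1ball M"
    and xs: "x \<in> L1sphere M" and eq: "L1eq M x (\<lambda>\<omega>. lam *\<^sub>R u \<omega> + nu *\<^sub>R v \<omega>)"
begin

definition "A = {\<omega>\<in>space M. u \<omega> \<noteq> 0 \<and> v \<omega> = 0}"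
definition "B = {\<omega>\<in>space M. u \<omega> = 0 \<and> v \<omega> \<noteq> 0}"
definition "E = space M - A - B"

lemma uL: "u \<in> L1 M" using ub by (rule L1ball_L1)
lemma vL: "v \<in> L1 M" using vb by (rule L1ball_L1)
lemma xL: "x \<in> L1 M" using xs by (rule L1sphere_L1)
lemma xn: "L1norm M x = 1" using xs by (rule L1sphere_norm)
lemma nu0: "nu > 0" using nu lam by simp
lemma lam_ne: "lam \<noteq> 0" "nu \<noteq> 0" using lam nu0 by auto

lemma um[measurable]: "u \<in> borel_measurable M" by (rule L1_borel[OF cM uL])
lemma vm[measurable]: "v \<in> borel_measurable M" by (rule L1_borel[OF cM vL])

lemma zero_set: "f \<in> borel_measurable M \<Longrightarrow> {\<omega>\<in>space M. f \<omega> = (0::'b)} \<in> sets M"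
proof -
  assume "f \<in> borel_measurable M"
  from measurable_sets[OF this borel_closed[OF closed_singleton[of 0]]]
  show ?thesis by (simp add: vimage_def Int_def conj_commute)
qed

lemma A_sets: "A \<in> sets M"
proof -
  have "A = {\<omega>\<in>space M. v \<omega> = 0} - {\<omega>\<in>space M. u \<omega> = 0}" unfolding A_def by auto
  then show ?thesis using zero_set[OF um] zero_set[OF vm] by auto
qed

lemma B_sets: "B \<in> sets M"
proof -
  have "B = {\<omega>\<in>space M. u \<omega> = 0} - {\<omega>\<in>space M. v \<omega> = 0}" unfolding B_def by auto
  then show ?thesis using zero_set[OF um] zero_set[OF vm] by auto
qed

lemma E_sets: "E \<in> sets M" unfolding E_def using A_sets B_sets by auto

lemma AB: "A \<inter> B = {}" unfolding A_def B_def by auto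

lemma pw_split: "\<omega> \<in> space M \<Longrightarrow> g \<omega> = rst A g \<omega> + rst B g \<omega> + rst E g \<omega>"
  unfolding rst_def E_def using AB by (auto simp: indicator_def)

lemma split3: "g \<in> L1 M \<Longrightarrow> L1norm M g = L1norm M (rst A g) + L1norm M (rst B g) + L1norm M (rst E g)"
  unfolding E_def by (rule L1norm_split3[OF cM _ A_sets B_sets AB])

lemma uB0: "rst B u \<omega> = 0" unfolding rst_def B_def by (auto simp: indicator_def)
lemma vA0: "rst A v \<omega> = 0" unfolding rst_def A_def by (auto simp: indicator_def)
lemma u_split: "\<omega> \<in> space M \<Longrightarrow> u \<omega> = rst A u \<omega> + rst E u \<omega>"
  using pw_split[of \<omega> u] uB0[of \<omega>] by simp
lemma v_split: "\<omega> \<in> space M \<Longrightarrow> v \<omega> = rst B v \<omega> + rst E v \<omega>"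
  using pw_split[of \<omega> v] vA0[of \<omega>] by simp

lemma supp: "\<omega> \<in> space M \<Longrightarrow> (rst E u \<omega> = 0 \<longleftrightarrow> rst E v \<omega> = 0)"
  unfolding rst_def E_def A_def B_def by (auto simp: indicator_def)

lemma xA: "AE \<omega> in M. rst A x \<omega> = lam *\<^sub>R rst A u \<omega>"
  using eq unfolding L1eq_def by eventually_elim (auto simp: rst_def A_def indicator_def)
lemma xB: "AE \<omega> in M. rst B x \<omega> = nu *\<^sub>R rst B v \<omega>"
  using eq unfolding L1eq_def by eventually_elim (auto simp: rst_def B_def indicator_def)
lemma xE: "AE \<omega> in M. rst E x \<omega> = lam *\<^sub>R rst E u \<omega> + nu *\<^sub>R rst E v \<omega>"
  using eq unfolding L1eq_def by eventually_elim (auto simp: rst_def indicator_def scaleR_add_right)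

definition "\<alpha> = L1norm M (rst A u)"
definition "\<beta> = L1norm M (rst B v)"
definition "gu = L1norm M (rst E u)"
definition "gv = L1norm M (rst E v)"
definition "\<xi> = L1norm M (rst E x)"

lemma norms_uv: "L1norm M u = 1" "L1norm M v = 1"
proof -
  have lv: "(\<lambda>\<omega>. lam *\<^sub>R u \<omega> + nu *\<^sub>R v \<omega>) \<in> L1 M"
    by (rule L1_add[OF cM L1_scale[OF cM uL] L1_scale[OF cM vL]])
  have "1 = L1norm M (\<lambda>\<omega>. lam *\<^sub>R u \<omega> + nu *\<^sub>R v \<omega>)"
    using L1norm_cong[OF cM lv eq] xn by simp
  also have "\<dots> \<le> L1norm M (\<lambda>\<omega>. lam *\<^sub>R u \<omega>) + L1norm M (\<lambda>\<omega>. nu *\<^sub>R v \<omega>)"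
    by (rule L1norm_add_le[OF cM L1_scale[OF cM uL] L1_scale[OF cM vL]])
  also have "\<dots> = lam * L1norm M u + nu * L1norm M v"
    using L1norm_scale[OF cM uL] L1norm_scale[OF cM vL] lam nu0 by simp
  finally have s: "1 \<le> lam * L1norm M u + nu * L1norm M v" .
  have u1: "L1norm M u \<le> 1" using ub by (rule L1ball_norm)
  have v1: "L1norm M v \<le> 1" using vb by (rule L1ball_norm)
  have "lam * L1norm M u \<le> lam" using mult_left_mono[OF u1, of lam] lam by simp
  moreover have "nu * L1norm M v \<le> nu" using mult_left_mono[OF v1, of nu] nu0 by simp
  ultimately have "lam * L1norm M u = lam * 1" "nu * L1norm M v = nu * 1" using s nu by linarith+
  then show "L1norm M u = 1" "L1norm M v = 1" using lam nu0 by simp_all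
qed

lemma au: "\<alpha> + gu = 1"
proof -
  have "L1norm M (rst B u) = 0" using uB0 by (intro L1norm_AE_zero[OF cM]) simp
  then show ?thesis using split3[OF uL] norms_uv unfolding \<alpha>_def gu_def by simp
qed

lemma bv: "\<beta> + gv = 1"
proof -
  have "L1norm M (rst A v) = 0" using vA0 by (intro L1norm_AE_zero[OF cM]) simp
  then show ?thesis using split3[OF vL] norms_uv unfolding \<beta>_def gv_def by simp
qed

lemma nA: "L1norm M (rst A x) = lam * \<alpha>"
proof -
  have "L1norm M (rst A x) = L1norm M (\<lambda>\<omega>. lam *\<^sub>R rst A u \<omega>)"
    by (rule L1norm_cong[OF cM L1_scale[OF cM L1_rst[OF cM uL A_sets]]]) (use xA in \<open>simp add: L1eq_def\<close>)
  then show ?thesis using L1norm_scale[OF cM L1_rst[OF cM uL A_sets]] lam unfolding \<alpha>_def by simp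
qed

lemma nB: "L1norm M (rst B x) = nu * \<beta>"
proof -
  have "L1norm M (rst B x) = L1norm M (\<lambda>\<omega>. nu *\<^sub>R rst B v \<omega>)"
    by (rule L1norm_cong[OF cM L1_scale[OF cM L1_rst[OF cM vL B_sets]]]) (use xB in \<open>simp add: L1eq_def\<close>)
  then show ?thesis using L1norm_scale[OF cM L1_rst[OF cM vL B_sets]] nu0 unfolding \<beta>_def by simp
qed

lemma xi_eq: "\<xi> = lam * gu + nu * gv"
proof -
  have "1 = lam * \<alpha> + nu * \<beta> + \<xi>" using split3[OF xL] xn nA nB unfolding \<xi>_def by simp
  moreover have "lam * \<alpha> = lam - lam * gu"
  proof -
    have "\<alpha> = 1 - gu" using au by simp
    then show ?thesis by (simp add: right_diff_distrib)
  qed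
  moreover have "nu * \<beta> = nu - nu * gv"
  proof -
    have "\<beta> = 1 - gv" using bv by simp
    then show ?thesis by (simp add: right_diff_distrib)
  qed
  ultimately show ?thesis using nu by linarith
qed

lemma gu_gv: "gu = 0 \<longleftrightarrow> gv = 0"
proof
  assume "gu = 0"
  then have "AE \<omega> in M. rst E u \<omega> = 0" unfolding gu_def by (rule L1norm_zero_AE[OF cM L1_rst[OF cM uL E_sets]])
  then have "AE \<omega> in M. rst E v \<omega> = 0" using supp by (auto elim: eventually_mono[OF AE_conjI[OF AE_space]])
  then show "gv = 0" unfolding gv_def by (rule L1norm_AE_zero[OF cM])
next
  assume "gv = 0"
  then have "AE \<omega> in M. rst E v \<omega> = 0" unfolding gv_def by (rule L1norm_zero_AE[OF cM L1_rst[OF cM vL E_sets]])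
  then have "AE \<omega> in M. rst E u \<omega> = 0" using supp by (auto elim: eventually_mono[OF AE_conjI[OF AE_space]])
  then show "gu = 0" unfolding gu_def by (rule L1norm_AE_zero[OF cM])
qed

lemma gu_nn: "gu \<ge> 0" "gv \<ge> 0" "\<alpha> \<ge> 0" "\<beta> \<ge> 0"
  unfolding gu_def gv_def \<alpha>_def \<beta>_def by (simp_all add: L1norm_nonneg')

lemma TA: "((\<lambda>w. L1norm M (rst A w)) \<longlongrightarrow> lam * \<alpha>) (wnhds M x)"
  using tendsto_piece[OF cM xL xn A_sets B_sets E_sets split3] by (simp add: nA)
lemma TB: "((\<lambda>w. L1norm M (rst B w)) \<longlongrightarrow> nu * \<beta>) (wnhds M x)"
proof -
  have sp: "L1norm M g = L1norm M (rst B g) + L1norm M (rst A g) + L1norm M (rst E g)" if "g \<in> L1 M" for g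
    using split3[OF that] by linarith
  show ?thesis using tendsto_piece[OF cM xL xn B_sets A_sets E_sets sp] by (simp add: nB)
qed
lemma TE: "((\<lambda>w. L1norm M (rst E w)) \<longlongrightarrow> \<xi>) (wnhds M x)"
proof -
  have sp: "L1norm M g = L1norm M (rst E g) + L1norm M (rst A g) + L1norm M (rst B g)" if "g \<in> L1 M" for g
    using split3[OF that] by linarith
  show ?thesis using tendsto_piece[OF cM xL xn E_sets A_sets B_sets sp] unfolding \<xi>_def .
qed

lemma Tphi: "\<phi> \<in> L1dual M \<Longrightarrow> S \<in> sets M \<Longrightarrow> ((\<lambda>w. \<phi> (rst S w)) \<longlongrightarrow> \<phi> (rst S x)) (wnhds M x)"
  using tendsto_dual[OF cM dual_rst[OF cM]] by blast

lemma phi_u: "\<phi> \<in> L1dual M \<Longrightarrow> \<phi> u = \<phi> (rst A u) + \<phi> (rst E u)"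
proof -
  assume \<phi>: "\<phi> \<in> L1dual M"
  have "\<phi> u = \<phi> (\<lambda>\<omega>. rst A u \<omega> + rst E u \<omega>)"
    using u_split by (intro dual_cong[OF cM \<phi> uL L1_add[OF cM L1_rst[OF cM uL A_sets] L1_rst[OF cM uL E_sets]]])
      (auto simp: L1eq_def)
  then show ?thesis using dual_add[OF \<phi> L1_rst[OF cM uL A_sets] L1_rst[OF cM uL E_sets]] by simp
qed

lemma phi_v: "\<phi> \<in> L1dual M \<Longrightarrow> \<phi> v = \<phi> (rst B v) + \<phi> (rst E v)"
proof -
  assume \<phi>: "\<phi> \<in> L1dual M"
  have "\<phi> v = \<phi> (\<lambda>\<omega>. rst B v \<omega> + rst E v \<omega>)"
    using v_split by (intro dual_cong[OF cM \<phi> vL L1_add[OF cM L1_rst[OF cM vL B_sets] L1_rst[OF cM vL E_sets]]])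
      (auto simp: L1eq_def)
  then show ?thesis using dual_add[OF \<phi> L1_rst[OF cM vL B_sets] L1_rst[OF cM vL E_sets]] by simp
qed

lemma phi_xA: "\<phi> \<in> L1dual M \<Longrightarrow> \<phi> (rst A x) = lam * \<phi> (rst A u)"
proof -
  assume \<phi>: "\<phi> \<in> L1dual M"
  have "\<phi> (rst A x) = \<phi> (\<lambda>\<omega>. lam *\<^sub>R rst A u \<omega>)"
    using xA by (intro dual_cong[OF cM \<phi> L1_rst[OF cM xL A_sets] L1_scale[OF cM L1_rst[OF cM uL A_sets]]])
      (auto simp: L1eq_def)
  then show ?thesis using dual_scale[OF \<phi> L1_rst[OF cM uL A_sets]] by simp
qed

lemma phi_xB: "\<phi> \<in> L1dual M \<Longrightarrow> \<phi> (rst B x) = nu * \<phi> (rst B v)"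
proof -
  assume \<phi>: "\<phi> \<in> L1dual M"
  have "\<phi> (rst B x) = \<phi> (\<lambda>\<omega>. nu *\<^sub>R rst B v \<omega>)"
    using xB by (intro dual_cong[OF cM \<phi> L1_rst[OF cM xL B_sets] L1_scale[OF cM L1_rst[OF cM vL B_sets]]])
      (auto simp: L1eq_def)
  then show ?thesis using dual_scale[OF \<phi> L1_rst[OF cM vL B_sets]] by simp
qed

lemma case0:
  assumes g0: "gu = 0"
    and F: "finite F" "F \<subseteq> L1dual M" and e: "e > 0" and C: "C \<ge> 0" "\<forall>\<phi>\<in>F. \<forall>f\<in>L1 M. \<bar>\<phi> f\<bar> \<le> C * L1norm M f"
    and U: "wN M F e u \<subseteq> U" and V: "wN M F e v \<subseteq> V"
  shows "eventually (\<lambda>w. w \<in> L1comb M 2 (\<lambda>k. if k = 0 then lam else nu) (\<lambda>k. if k = 0 then U else V)) (wnhds M x)"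
proof -
  have gv0: "gv = 0" using gu_gv g0 by simp
  have a1: "\<alpha> = 1" using au g0 by simp
  have b1: "\<beta> = 1" using bv gv0 by simp
  have xi0: "\<xi> = 0" using xi_eq g0 gv0 by simp
  have uE0: "AE \<omega> in M. rst E u \<omega> = 0" using g0 unfolding gu_def by (rule L1norm_zero_AE[OF cM L1_rst[OF cM uL E_sets]])
  have vE0: "AE \<omega> in M. rst E v \<omega> = 0" using gv0 unfolding gv_def by (rule L1norm_zero_AE[OF cM L1_rst[OF cM vL E_sets]])
  have xE0: "AE \<omega> in M. rst E x \<omega> = 0" using xi0 unfolding \<xi>_def by (rule L1norm_zero_AE[OF cM L1_rst[OF cM xL E_sets]])
  define K where "K = 1 + lam/nu + nu/lam"
  define ma where "ma w = (L1norm M (rst A w) + L1norm M (rst E w)) / lam" for w :: "'a \<Rightarrow> 'b"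
  define mb where "mb w = L1norm M (rst B w) / nu" for w :: "'a \<Rightarrow> 'b"
  have ev1: "eventually (\<lambda>w. C * (K * (\<bar>ma w - 1\<bar> + \<bar>mb w - 1\<bar>)) < e/2) (wnhds M x)"
  proof -
    have lim: "((\<lambda>w. C * (K * (\<bar>ma w - 1\<bar> + \<bar>mb w - 1\<bar>))) \<longlongrightarrow> C * (K * (\<bar>(lam*\<alpha> + \<xi>)/lam - 1\<bar> + \<bar>nu*\<beta>/nu - 1\<bar>))) (wnhds M x)"
      unfolding ma_def mb_def by (intro tendsto_intros TA TB TE) (simp_all add: lam_ne)
    have "C * (K * (\<bar>(lam*\<alpha> + \<xi>)/lam - 1\<bar> + \<bar>nu*\<beta>/nu - 1\<bar>)) = 0" (is "?X = 0") using a1 b1 xi0 lam nu0 by (simp add: lam_ne)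
    then have "?X < e/2" using e by linarith
    from order_tendstoD(2)[OF lim this] show ?thesis .
  qed
  have ev2: "eventually (\<lambda>w. \<forall>\<phi>\<in>F. \<bar>(1/lam) * (\<phi> (rst A w) + \<phi> (rst E w)) - \<phi> u\<bar> < e/2 \<and> \<bar>(1/nu) * \<phi> (rst B w) - \<phi> v\<bar> < e/2) (wnhds M x)"
  proof (rule eventually_ball_finite[OF F(1)], rule ballI)
    fix \<phi> assume \<phi>F: "\<phi> \<in> F"
    then have \<phi>: "\<phi> \<in> L1dual M" using F by blast
    have l1: "((\<lambda>w. (1/lam) * (\<phi> (rst A w) + \<phi> (rst E w))) \<longlongrightarrow> \<phi> u) (wnhds M x)"
    proof -
      have "((\<lambda>w. (1/lam) * (\<phi> (rst A w) + \<phi> (rst E w))) \<longlongrightarrow> (1/lam) * (\<phi> (rst A x) + \<phi> (rst E x))) (wnhds M x)"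
        by (intro tendsto_intros Tphi \<phi> A_sets E_sets)
      moreover have "(1/lam) * (\<phi> (rst A x) + \<phi> (rst E x)) = \<phi> u"
        using phi_u[OF \<phi>] phi_xA[OF \<phi>] phi_zero[OF cM \<phi> L1_rst[OF cM xL E_sets] xE0]
          phi_zero[OF cM \<phi> L1_rst[OF cM uL E_sets] uE0] lam by simp
      ultimately show ?thesis by simp
    qed
    have l2: "((\<lambda>w. (1/nu) * \<phi> (rst B w)) \<longlongrightarrow> \<phi> v) (wnhds M x)"
    proof -
      have "((\<lambda>w. (1/nu) * \<phi> (rst B w)) \<longlongrightarrow> (1/nu) * \<phi> (rst B x)) (wnhds M x)"
        by (intro tendsto_intros Tphi \<phi> B_sets)
      moreover have "(1/nu) * \<phi> (rst B x) = \<phi> v"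
        using phi_v[OF \<phi>] phi_xB[OF \<phi>] phi_zero[OF cM \<phi> L1_rst[OF cM vL E_sets] vE0] nu0 by simp
      ultimately show ?thesis by simp
    qed
    have e2: "e/2 > 0" using e by simp
    show "eventually (\<lambda>w. \<bar>(1/lam) * (\<phi> (rst A w) + \<phi> (rst E w)) - \<phi> u\<bar> < e/2 \<and> \<bar>(1/nu) * \<phi> (rst B w) - \<phi> v\<bar> < e/2) (wnhds M x)"
      using tendstoD[OF l1 e2] tendstoD[OF l2 e2] by eventually_elim (simp add: dist_real_def)
  qed
  show ?thesis using wnhds_ball[OF cM, of x] ev1 ev2
  proof eventually_elim
    fix w assume w: "w \<in> L1ball M" and sm: "C * (K * (\<bar>ma w - 1\<bar> + \<bar>mb w - 1\<bar>)) < e/2"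
      and p: "\<forall>\<phi>\<in>F. \<bar>(1/lam) * (\<phi> (rst A w) + \<phi> (rst E w)) - \<phi> u\<bar> < e/2 \<and> \<bar>(1/nu) * \<phi> (rst B w) - \<phi> v\<bar> < e/2"
    have wL: "w \<in> L1 M" using w by (rule L1ball_L1)
    have wA: "rst A w \<in> L1 M" by (rule L1_rst[OF cM wL A_sets])
    have wB: "rst B w \<in> L1 M" by (rule L1_rst[OF cM wL B_sets])
    have wE: "rst E w \<in> L1 M" by (rule L1_rst[OF cM wL E_sets])
    define a0 where "a0 = (\<lambda>\<omega>. (1/lam) *\<^sub>R (rst A w \<omega> + rst E w \<omega>))"
    define b0 where "b0 = (\<lambda>\<omega>. (1/nu) *\<^sub>R rst B w \<omega>)"
    have a0L: "a0 \<in> L1 M" unfolding a0_def by (intro L1_scale[OF cM] L1_add[OF cM wA wE])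
    have b0L: "b0 \<in> L1 M" unfolding b0_def by (intro L1_scale[OF cM] wB)
    have eqw: "L1eq M w (\<lambda>\<omega>. lam *\<^sub>R a0 \<omega> + nu *\<^sub>R b0 \<omega>)"
      unfolding L1eq_def a0_def b0_def
    proof (intro AE_I2)
      fix \<omega> assume "\<omega> \<in> space M"
      from pw_split[OF this, of w] show "w \<omega> = lam *\<^sub>R ((1/lam) *\<^sub>R (rst A w \<omega> + rst E w \<omega>)) + nu *\<^sub>R ((1/nu) *\<^sub>R rst B w \<omega>)"
        using lam nu0 by (simp add: add_ac)
    qed
    have na: "L1norm M a0 \<le> ma w"
    proof -
      have "L1norm M a0 = (1/lam) * L1norm M (\<lambda>\<omega>. rst A w \<omega> + rst E w \<omega>)"
        unfolding a0_def using L1norm_scale[OF cM L1_add[OF cM wA wE], of "1/lam"] lam by simp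
      also have "\<dots> \<le> (1/lam) * (L1norm M (rst A w) + L1norm M (rst E w))"
        using L1norm_add_le[OF cM wA wE] lam by (simp add: divide_right_mono)
      finally show ?thesis unfolding ma_def by simp
    qed
    have nb: "L1norm M b0 \<le> mb w"
      unfolding b0_def mb_def using L1norm_scale[OF cM wB, of "1/nu"] nu0 by simp
    have ma0: "0 \<le> ma w" unfolding ma_def using lam by (simp add: L1norm_nonneg')
    have mb0: "0 \<le> mb w" unfolding mb_def using nu0 by (simp add: L1norm_nonneg')
    have tot: "lam * ma w + nu * mb w \<le> 1"
    proof -
      have "lam * ma w + nu * mb w = L1norm M w" unfolding ma_def mb_def using split3[OF wL] lam nu0 by simp
      then show ?thesis using L1ball_norm[OF w] by simp
    qed
    have ea: "\<forall>\<phi>\<in>F. \<bar>\<phi> a0 - \<phi> u\<bar> < e/2"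
    proof
      fix \<phi> assume \<phi>F: "\<phi> \<in> F"
      then have \<phi>: "\<phi> \<in> L1dual M" using F by blast
      have "\<phi> a0 = (1/lam) * (\<phi> (rst A w) + \<phi> (rst E w))"
        unfolding a0_def using dual_scale[OF \<phi> L1_add[OF cM wA wE]] dual_add[OF \<phi> wA wE] by simp
      then show "\<bar>\<phi> a0 - \<phi> u\<bar> < e/2" using p \<phi>F by simp
    qed
    have eb: "\<forall>\<phi>\<in>F. \<bar>\<phi> b0 - \<phi> v\<bar> < e/2"
    proof
      fix \<phi> assume \<phi>F: "\<phi> \<in> F"
      then have \<phi>: "\<phi> \<in> L1dual M" using F by blast
      have "\<phi> b0 = (1/nu) * \<phi> (rst B w)"
        unfolding b0_def using dual_scale[OF \<phi> wB] by simp
      then show "\<bar>\<phi> b0 - \<phi> v\<bar> < e/2" using p \<phi>F by simp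
    qed
    show "w \<in> L1comb M 2 (\<lambda>k. if k = 0 then lam else nu) (\<lambda>k. if k = 0 then U else V)"
      by (rule assemble[OF cM lam nu w a0L b0L eqw na nb ma0 mb0 tot C F(2) sm[unfolded K_def] ea eb U V])
  qed
qed

lemma case1:
  assumes gpos: "gu \<noteq> 0"
    and H: "\<forall>(x :: 'a \<Rightarrow> 'b) y z lam nu U V.
           x \<in> L1sphere M \<and> y \<in> L1sphere M \<and> z \<in> L1sphere M \<and>
           {\<omega> \<in> space M. (x \<omega> \<noteq> 0 \<and> y \<omega> = 0) \<or> (x \<omega> = 0 \<and> y \<omega> \<noteq> 0)} = {} \<and>
           0 < lam \<and> lam < 1 \<and> 0 < nu \<and> nu < 1 \<and> lam + nu = 1 \<and>
           L1eq M (\<lambda>\<omega>. lam *\<^sub>R x \<omega> + nu *\<^sub>R y \<omega>) z \<and>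
           rel_weak_nhd M U x \<and> L1saturated M U \<and>
           rel_weak_nhd M V y \<and> L1saturated M V
           \<longrightarrow> (\<exists>W. rel_weak_nhd M W z \<and> L1saturated M W \<and>
                  W \<subseteq> L1comb M 2 (\<lambda>k. if k = 0 then lam else nu)
                                    (\<lambda>k. if k = 0 then U else V))"
    and F: "finite F" "F \<subseteq> L1dual M" and e: "e > 0" and C: "C \<ge> 0" "\<forall>\<phi>\<in>F. \<forall>f\<in>L1 M. \<bar>\<phi> f\<bar> \<le> C * L1norm M f"
    and U: "wN M F e u \<subseteq> U" and V: "wN M F e v \<subseteq> V"
  shows "eventually (\<lambda>w. w \<in> L1comb M 2 (\<lambda>k. if k = 0 then lam else nu) (\<lambda>k. if k = 0 then U else V)) (wnhds M x)"
proof -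
  have gvpos: "gv \<noteq> 0" using gu_gv gpos by simp
  have gu0: "gu > 0" using gpos gu_nn by simp
  have gv0: "gv > 0" using gvpos gu_nn by simp
  have gu1: "gu \<le> 1" "gv \<le> 1" using au bv gu_nn by auto
  have xi0: "\<xi> > 0" unfolding xi_eq using gu0 gv0 lam nu0 by (simp add: add_pos_pos)
  define lam' where "lam' = lam * gu / \<xi>"
  define nu' where "nu' = nu * gv / \<xi>"
  have lnp: "0 < lam'" "0 < nu'" unfolding lam'_def nu'_def using lam nu0 gu0 gv0 xi0 by simp_all
  have ln1: "lam' + nu' = 1" unfolding lam'_def nu'_def using xi0 xi_eq by (simp add: add_divide_distrib[symmetric])
  have uEL: "rst E u \<in> L1 M" by (rule L1_rst[OF cM uL E_sets])
  have vEL: "rst E v \<in> L1 M" by (rule L1_rst[OF cM vL E_sets])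
  have xEL: "rst E x \<in> L1 M" by (rule L1_rst[OF cM xL E_sets])
  define u' where "u' = (\<lambda>\<omega>. (1/gu) *\<^sub>R rst E u \<omega>)"
  define v' where "v' = (\<lambda>\<omega>. (1/gv) *\<^sub>R rst E v \<omega>)"
  define z where "z = (\<lambda>\<omega>. (1/\<xi>) *\<^sub>R rst E x \<omega>)"
  have u'L: "u' \<in> L1 M" unfolding u'_def by (rule L1_scale[OF cM uEL])
  have v'L: "v' \<in> L1 M" unfolding v'_def by (rule L1_scale[OF cM vEL])
  have zL: "z \<in> L1 M" unfolding z_def by (rule L1_scale[OF cM xEL])
  have u's: "u' \<in> L1sphere M" using u'L L1norm_scale[OF cM uEL, of "1/gu"] gu0 unfolding L1sphere_def u'_def gu_def by simp
  have v's: "v' \<in> L1sphere M" using v'L L1norm_scale[OF cM vEL, of "1/gv"] gv0 unfolding L1sphere_def v'_def gv_def by simp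
  have zs: "z \<in> L1sphere M" using zL L1norm_scale[OF cM xEL, of "1/\<xi>"] xi0 unfolding L1sphere_def z_def \<xi>_def by simp
  have sup: "{\<omega> \<in> space M. (u' \<omega> \<noteq> 0 \<and> v' \<omega> = 0) \<or> (u' \<omega> = 0 \<and> v' \<omega> \<noteq> 0)} = {}"
    using supp gu0 gv0 unfolding u'_def v'_def by auto
  have zeq: "L1eq M (\<lambda>\<omega>. lam' *\<^sub>R u' \<omega> + nu' *\<^sub>R v' \<omega>) z"
    unfolding L1eq_def using xE
  proof eventually_elim
    fix \<omega> assume h: "rst E x \<omega> = lam *\<^sub>R rst E u \<omega> + nu *\<^sub>R rst E v \<omega>"
    have c1: "lam' * (1/gu) = (1/\<xi>) * lam" unfolding lam'_def using gu0 by simp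
    have c2: "nu' * (1/gv) = (1/\<xi>) * nu" unfolding nu'_def using gv0 by simp
    have "lam' *\<^sub>R u' \<omega> + nu' *\<^sub>R v' \<omega> = (lam' * (1/gu)) *\<^sub>R rst E u \<omega> + (nu' * (1/gv)) *\<^sub>R rst E v \<omega>"
      unfolding u'_def v'_def by simp
    also have "\<dots> = (1/\<xi>) *\<^sub>R (lam *\<^sub>R rst E u \<omega> + nu *\<^sub>R rst E v \<omega>)"
      unfolding c1 c2 by (simp add: scaleR_add_right)
    also have "\<dots> = z \<omega>" unfolding z_def h ..
    finally show "lam' *\<^sub>R u' \<omega> + nu' *\<^sub>R v' \<omega> = z \<omega>" .
  qed
  define U' where "U' = wN M F (e/4) u'"
  define V' where "V' = wN M F (e/4) v'"
  have e4: "e/4 > 0" using e by simp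
  have U'o: "rel_weak_open M U'" unfolding U'_def by (rule wN_open[OF cM F e4])
  have V'o: "rel_weak_open M V'" unfolding V'_def by (rule wN_open[OF cM F e4])
  have u'b: "u' \<in> L1ball M" using u's unfolding L1sphere_def L1ball_def by simp
  have v'b: "v' \<in> L1ball M" using v's unfolding L1sphere_def L1ball_def by simp
  have u'U': "u' \<in> U'" unfolding U'_def by (rule wN_mem[OF cM u'b e4])
  have v'V': "v' \<in> V'" unfolding V'_def by (rule wN_mem[OF cM v'b e4])
  obtain W where W: "rel_weak_nhd M W z" "W \<subseteq> L1comb M 2 (\<lambda>k. if k = 0 then lam' else nu') (\<lambda>k. if k = 0 then U' else V')"
    using H[rule_format, of u' v' z lam' nu' U' V'] u's v's zs sup lnp ln1 zeq
      open_nhd[OF cM U'o u'U'] open_nhd[OF cM V'o v'V'] open_sat[OF cM U'o] open_sat[OF cM V'o]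
    by auto
  obtain G where G: "rel_weak_open M G" "z \<in> G" "G \<subseteq> W" using W(1) unfolding rel_weak_nhd_def by blast
  obtain FW eW where FW: "finite FW" "FW \<subseteq> L1dual M" "eW > 0" "{h \<in> L1ball M. \<forall>\<phi>\<in>FW. \<bar>\<phi> h - \<phi> z\<bar> < eW} \<subseteq> G"
    using G unfolding rel_weak_open_def by blast
  define K where "K = 1 + lam/nu + nu/lam"
  define rA where "rA w = L1norm M (rst A w)" for w :: "'a \<Rightarrow> 'b"
  define rB where "rB w = L1norm M (rst B w)" for w :: "'a \<Rightarrow> 'b"
  define rE where "rE w = L1norm M (rst E w)" for w :: "'a \<Rightarrow> 'b"
  define ma where "ma w = rA w / lam + (rE w / \<xi>) * gu" for w :: "'a \<Rightarrow> 'b"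
  define mb where "mb w = rB w / nu + (rE w / \<xi>) * gv" for w :: "'a \<Rightarrow> 'b"
  have TA': "(rA \<longlongrightarrow> lam * \<alpha>) (wnhds M x)" unfolding rA_def using TA .
  have TB': "(rB \<longlongrightarrow> nu * \<beta>) (wnhds M x)" unfolding rB_def using TB .
  have TE': "(rE \<longlongrightarrow> \<xi>) (wnhds M x)" unfolding rE_def using TE .
  have evr: "eventually (\<lambda>w. rE w > 0) (wnhds M x)" using order_tendstoD(1)[OF TE' xi0] .
  have evW: "eventually (\<lambda>w. \<forall>\<phi>\<in>FW. \<bar>(1 / rE w) * \<phi> (rst E w) - \<phi> z\<bar> < eW) (wnhds M x)"
  proof (rule eventually_ball_finite[OF FW(1)], rule ballI)
    fix \<phi> assume "\<phi> \<in> FW"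
    then have \<phi>: "\<phi> \<in> L1dual M" using FW by blast
    have "((\<lambda>w. (1 / rE w) * \<phi> (rst E w)) \<longlongrightarrow> (1 / \<xi>) * \<phi> (rst E x)) (wnhds M x)"
      using xi0 by (intro tendsto_intros TE' Tphi \<phi> E_sets) simp
    moreover have "(1 / \<xi>) * \<phi> (rst E x) = \<phi> z" unfolding z_def using dual_scale[OF \<phi> xEL] by simp
    ultimately have "((\<lambda>w. (1 / rE w) * \<phi> (rst E w)) \<longlongrightarrow> \<phi> z) (wnhds M x)" by simp
    from tendstoD[OF this FW(3)] show "eventually (\<lambda>w. \<bar>(1 / rE w) * \<phi> (rst E w) - \<phi> z\<bar> < eW) (wnhds M x)"
      by (simp add: dist_real_def)
  qed
  have ev1: "eventually (\<lambda>w. C * (K * (\<bar>ma w - 1\<bar> + \<bar>mb w - 1\<bar>)) < e/2) (wnhds M x)"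
  proof -
    have lim: "((\<lambda>w. C * (K * (\<bar>ma w - 1\<bar> + \<bar>mb w - 1\<bar>))) \<longlongrightarrow>
        C * (K * (\<bar>(lam*\<alpha>) / lam + (\<xi> / \<xi>) * gu - 1\<bar> + \<bar>(nu*\<beta>) / nu + (\<xi> / \<xi>) * gv - 1\<bar>))) (wnhds M x)"
      unfolding ma_def mb_def using xi0 by (intro tendsto_intros TA' TB' TE') (simp_all add: lam_ne)
    have "C * (K * (\<bar>(lam*\<alpha>) / lam + (\<xi> / \<xi>) * gu - 1\<bar> + \<bar>(nu*\<beta>) / nu + (\<xi> / \<xi>) * gv - 1\<bar>)) = 0"
      (is "?X = 0") using au bv xi0 by (simp add: lam_ne)
    then have "?X < e/2" using e by linarith
    from order_tendstoD(2)[OF lim this] show ?thesis .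
  qed
  have ev2: "eventually (\<lambda>w. C * \<bar>rE w / \<xi> - 1\<bar> < e/8) (wnhds M x)"
  proof -
    have lim: "((\<lambda>w. C * \<bar>rE w / \<xi> - 1\<bar>) \<longlongrightarrow> C * \<bar>\<xi> / \<xi> - 1\<bar>) (wnhds M x)"
      using xi0 by (intro tendsto_intros TE') simp
    have "C * \<bar>\<xi> / \<xi> - 1\<bar> = 0" (is "?X = 0") using xi0 by simp
    then have "?X < e/8" using e by linarith
    from order_tendstoD(2)[OF lim this] show ?thesis .
  qed
  have ev3: "eventually (\<lambda>w. \<forall>\<phi>\<in>F. (1/lam) * \<bar>\<phi> (rst A w) - \<phi> (rst A x)\<bar> < e/8 \<and> (1/nu) * \<bar>\<phi> (rst B w) - \<phi> (rst B x)\<bar> < e/8) (wnhds M x)"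
  proof (rule eventually_ball_finite[OF F(1)], rule ballI)
    fix \<phi> assume "\<phi> \<in> F"
    then have \<phi>: "\<phi> \<in> L1dual M" using F by blast
    have l1: "((\<lambda>w. (1/lam) * \<bar>\<phi> (rst A w) - \<phi> (rst A x)\<bar>) \<longlongrightarrow> (1/lam) * \<bar>\<phi> (rst A x) - \<phi> (rst A x)\<bar>) (wnhds M x)"
      by (intro tendsto_intros Tphi \<phi> A_sets)
    have l2: "((\<lambda>w. (1/nu) * \<bar>\<phi> (rst B w) - \<phi> (rst B x)\<bar>) \<longlongrightarrow> (1/nu) * \<bar>\<phi> (rst B x) - \<phi> (rst B x)\<bar>) (wnhds M x)"
      by (intro tendsto_intros Tphi \<phi> B_sets)
    have e8: "(1/lam) * \<bar>\<phi> (rst A x) - \<phi> (rst A x)\<bar> < e/8" "(1/nu) * \<bar>\<phi> (rst B x) - \<phi> (rst B x)\<bar> < e/8"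
      using e by simp_all
    show "eventually (\<lambda>w. (1/lam) * \<bar>\<phi> (rst A w) - \<phi> (rst A x)\<bar> < e/8 \<and> (1/nu) * \<bar>\<phi> (rst B w) - \<phi> (rst B x)\<bar> < e/8) (wnhds M x)"
      using order_tendstoD(2)[OF l1 e8(1)] order_tendstoD(2)[OF l2 e8(2)] by (rule eventually_conj)
  qed
  show ?thesis using wnhds_ball[OF cM, of x] evr evW ev1 ev2 ev3
  proof eventually_elim
    fix w assume w: "w \<in> L1ball M" and r0: "rE w > 0"
      and pW: "\<forall>\<phi>\<in>FW. \<bar>(1 / rE w) * \<phi> (rst E w) - \<phi> z\<bar> < eW"
      and sm: "C * (K * (\<bar>ma w - 1\<bar> + \<bar>mb w - 1\<bar>)) < e/2"
      and sk: "C * \<bar>rE w / \<xi> - 1\<bar> < e/8"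
      and pAB: "\<forall>\<phi>\<in>F. (1/lam) * \<bar>\<phi> (rst A w) - \<phi> (rst A x)\<bar> < e/8 \<and> (1/nu) * \<bar>\<phi> (rst B w) - \<phi> (rst B x)\<bar> < e/8"
    have wL: "w \<in> L1 M" using w by (rule L1ball_L1)
    have wA: "rst A w \<in> L1 M" by (rule L1_rst[OF cM wL A_sets])
    have wB: "rst B w \<in> L1 M" by (rule L1_rst[OF cM wL B_sets])
    have wE: "rst E w \<in> L1 M" by (rule L1_rst[OF cM wL E_sets])
    define wE' where "wE' = (\<lambda>\<omega>. (1 / rE w) *\<^sub>R rst E w \<omega>)"
    have wE'L: "wE' \<in> L1 M" unfolding wE'_def by (rule L1_scale[OF cM wE])
    have "L1norm M wE' = 1" unfolding wE'_def using L1norm_scale[OF cM wE, of "1 / rE w"] r0 unfolding rE_def by simp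
    then have wE'b: "wE' \<in> L1ball M" using wE'L unfolding L1ball_def by simp
    have "\<forall>\<phi>\<in>FW. \<bar>\<phi> wE' - \<phi> z\<bar> < eW"
    proof
      fix \<phi> assume "\<phi> \<in> FW"
      moreover have "\<phi> wE' = (1 / rE w) * \<phi> (rst E w)" unfolding wE'_def using dual_scale[OF _ wE] FW(2) \<open>\<phi> \<in> FW\<close> by blast
      ultimately show "\<bar>\<phi> wE' - \<phi> z\<bar> < eW" using pW by simp
    qed
    then have "wE' \<in> W" using FW(4) G(3) wE'b by blast
    then have "wE' \<in> L1comb M 2 (\<lambda>k. if k = 0 then lam' else nu') (\<lambda>k. if k = 0 then U' else V')" using W(2) by blast
    then obtain uu where uu: "\<forall>k<(2::nat). uu k \<in> (if k = 0 then U' else V')"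
      "L1eq M wE' (\<lambda>\<omega>. \<Sum>k<(2::nat). (if k = 0 then lam' else nu') *\<^sub>R uu k \<omega>)"
      unfolding L1comb_def by blast
    define a' where "a' = uu 0"
    define b' where "b' = uu 1"
    have a'U': "a' \<in> U'" unfolding a'_def using spec[OF uu(1), of 0] by simp
    have b'V': "b' \<in> V'" unfolding b'_def using spec[OF uu(1), of 1] by simp
    have a'b: "a' \<in> L1ball M" using a'U' unfolding U'_def wN_def by blast
    have b'b: "b' \<in> L1ball M" using b'V' unfolding V'_def wN_def by blast
    have a'L: "a' \<in> L1 M" using a'b by (rule L1ball_L1)
    have b'L: "b' \<in> L1 M" using b'b by (rule L1ball_L1)
    have a'c: "\<forall>\<phi>\<in>F. \<bar>\<phi> a' - \<phi> u'\<bar> < e/4" using a'U' unfolding U'_def wN_def by blast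
    have b'c: "\<forall>\<phi>\<in>F. \<bar>\<phi> b' - \<phi> v'\<bar> < e/4" using b'V' unfolding V'_def wN_def by blast
    have wEeq: "AE \<omega> in M. wE' \<omega> = lam' *\<^sub>R a' \<omega> + nu' *\<^sub>R b' \<omega>"
      using uu(2) unfolding L1eq_def sum2 a'_def b'_def by simp
    define \<kappa> where "\<kappa> = rE w / \<xi>"
    have k0: "\<kappa> \<ge> 0" unfolding \<kappa>_def using r0 xi0 by simp
    define a0 where "a0 = (\<lambda>\<omega>. (1/lam) *\<^sub>R rst A w \<omega> + (\<kappa> * gu) *\<^sub>R a' \<omega>)"
    define b0 where "b0 = (\<lambda>\<omega>. (1/nu) *\<^sub>R rst B w \<omega> + (\<kappa> * gv) *\<^sub>R b' \<omega>)"
    have a0L: "a0 \<in> L1 M" unfolding a0_def by (intro L1_add[OF cM] L1_scale[OF cM] wA a'L)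
    have b0L: "b0 \<in> L1 M" unfolding b0_def by (intro L1_add[OF cM] L1_scale[OF cM] wB b'L)
    have c3: "rE w * lam' = lam * (\<kappa> * gu)" unfolding lam'_def \<kappa>_def by simp
    have c4: "rE w * nu' = nu * (\<kappa> * gv)" unfolding nu'_def \<kappa>_def by simp
    have eqw: "L1eq M w (\<lambda>\<omega>. lam *\<^sub>R a0 \<omega> + nu *\<^sub>R b0 \<omega>)"
      unfolding L1eq_def using wEeq AE_space
    proof eventually_elim
      fix \<omega> assume h: "wE' \<omega> = lam' *\<^sub>R a' \<omega> + nu' *\<^sub>R b' \<omega>" and sp: "\<omega> \<in> space M"
      have "rst E w \<omega> = rE w *\<^sub>R wE' \<omega>" unfolding wE'_def using r0 by simp
      also have "\<dots> = (rE w * lam') *\<^sub>R a' \<omega> + (rE w * nu') *\<^sub>R b' \<omega>" unfolding h by (simp add: scaleR_add_right)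
      also have "\<dots> = (lam * (\<kappa> * gu)) *\<^sub>R a' \<omega> + (nu * (\<kappa> * gv)) *\<^sub>R b' \<omega>" unfolding c3 c4 ..
      finally have hE: "rst E w \<omega> = (lam * (\<kappa> * gu)) *\<^sub>R a' \<omega> + (nu * (\<kappa> * gv)) *\<^sub>R b' \<omega>" .
      have "lam *\<^sub>R a0 \<omega> + nu *\<^sub>R b0 \<omega> = rst A w \<omega> + rst B w \<omega> + ((lam * (\<kappa> * gu)) *\<^sub>R a' \<omega> + (nu * (\<kappa> * gv)) *\<^sub>R b' \<omega>)"
        unfolding a0_def b0_def using lam_ne by (simp add: scaleR_add_right add_ac)
      then show "w \<omega> = lam *\<^sub>R a0 \<omega> + nu *\<^sub>R b0 \<omega>" using pw_split[OF sp, of w] hE by simp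
    qed
    have na: "L1norm M a0 \<le> ma w"
    proof -
      have "L1norm M a0 \<le> L1norm M (\<lambda>\<omega>. (1/lam) *\<^sub>R rst A w \<omega>) + L1norm M (\<lambda>\<omega>. (\<kappa> * gu) *\<^sub>R a' \<omega>)"
        unfolding a0_def by (rule L1norm_add_le[OF cM L1_scale[OF cM wA] L1_scale[OF cM a'L]])
      also have "\<dots> = (1/lam) * rA w + (\<kappa> * gu) * L1norm M a'"
        using L1norm_scale[OF cM wA, of "1/lam"] L1norm_scale[OF cM a'L, of "\<kappa> * gu"] lam k0 gu0
        unfolding rA_def by simp
      also have "\<dots> \<le> (1/lam) * rA w + (\<kappa> * gu) * 1"
        using L1ball_norm[OF a'b] k0 gu0 by (intro add_left_mono mult_left_mono) simp_all
      finally show ?thesis unfolding ma_def \<kappa>_def by simp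
    qed
    have nb: "L1norm M b0 \<le> mb w"
    proof -
      have "L1norm M b0 \<le> L1norm M (\<lambda>\<omega>. (1/nu) *\<^sub>R rst B w \<omega>) + L1norm M (\<lambda>\<omega>. (\<kappa> * gv) *\<^sub>R b' \<omega>)"
        unfolding b0_def by (rule L1norm_add_le[OF cM L1_scale[OF cM wB] L1_scale[OF cM b'L]])
      also have "\<dots> = (1/nu) * rB w + (\<kappa> * gv) * L1norm M b'"
        using L1norm_scale[OF cM wB, of "1/nu"] L1norm_scale[OF cM b'L, of "\<kappa> * gv"] nu0 k0 gv0
        unfolding rB_def by simp
      also have "\<dots> \<le> (1/nu) * rB w + (\<kappa> * gv) * 1"
        using L1ball_norm[OF b'b] k0 gv0 by (intro add_left_mono mult_left_mono) simp_all
      finally show ?thesis unfolding mb_def \<kappa>_def by simp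
    qed
    have ma0: "0 \<le> ma w" unfolding ma_def rA_def using lam xi0 r0 gu0 unfolding rE_def by (simp add: L1norm_nonneg')
    have mb0: "0 \<le> mb w" unfolding mb_def rB_def using nu0 xi0 r0 gv0 unfolding rE_def by (simp add: L1norm_nonneg')
    have tot: "lam * ma w + nu * mb w \<le> 1"
    proof -
      have "lam * ma w + nu * mb w = rA w + rB w + (rE w / \<xi>) * (lam * gu + nu * gv)"
        unfolding ma_def mb_def using lam_ne by (simp add: algebra_simps)
      also have "\<dots> = rA w + rB w + rE w" using xi_eq xi0 by simp
      also have "\<dots> = L1norm M w" using split3[OF wL] unfolding rA_def rB_def rE_def by simp
      finally show ?thesis using L1ball_norm[OF w] by simp
    qed
    have ea: "\<forall>\<phi>\<in>F. \<bar>\<phi> a0 - \<phi> u\<bar> < e/2"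
    proof
      fix \<phi> assume \<phi>F: "\<phi> \<in> F"
      then have \<phi>: "\<phi> \<in> L1dual M" using F by blast
      have pa0: "\<phi> a0 = (1/lam) * \<phi> (rst A w) + (\<kappa> * gu) * \<phi> a'"
        unfolding a0_def by (rule dual_lin2[OF cM \<phi> wA a'L])
      have pu: "\<phi> u = (1/lam) * \<phi> (rst A x) + gu * \<phi> u'"
      proof -
        have "\<phi> u' = (1/gu) * \<phi> (rst E u)" unfolding u'_def by (rule dual_scale[OF \<phi> uEL])
        then show ?thesis using phi_u[OF \<phi>] phi_xA[OF \<phi>] gu0 lam_ne by simp
      qed
      have bnd: "\<bar>\<phi> a'\<bar> \<le> C" using C(2) \<phi>F a'L L1ball_norm[OF a'b] C(1)
        by (meson mult_left_le order_trans)
      have "\<bar>\<phi> a0 - \<phi> u\<bar> = \<bar>(1/lam) * (\<phi> (rst A w) - \<phi> (rst A x)) + gu * ((\<kappa> - 1) * \<phi> a' + (\<phi> a' - \<phi> u'))\<bar>"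
        unfolding pa0 pu by (simp add: algebra_simps)
      also have "\<dots> \<le> (1/lam) * \<bar>\<phi> (rst A w) - \<phi> (rst A x)\<bar> + gu * (\<bar>\<kappa> - 1\<bar> * \<bar>\<phi> a'\<bar> + \<bar>\<phi> a' - \<phi> u'\<bar>)"
        using lam gu0 by (simp add: abs_mult abs_triangle_ineq order_trans[OF abs_triangle_ineq] add_mono mult_left_mono)
      also have "\<dots> \<le> (1/lam) * \<bar>\<phi> (rst A w) - \<phi> (rst A x)\<bar> + (\<bar>\<kappa> - 1\<bar> * C + e/4)"
      proof -
        have "\<bar>\<kappa> - 1\<bar> * \<bar>\<phi> a'\<bar> \<le> \<bar>\<kappa> - 1\<bar> * C" using bnd by (simp add: mult_left_mono)
        then have "\<bar>\<kappa> - 1\<bar> * \<bar>\<phi> a'\<bar> + \<bar>\<phi> a' - \<phi> u'\<bar> \<le> \<bar>\<kappa> - 1\<bar> * C + e/4" using a'c \<phi>F by fastforce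
        moreover have "gu * (\<bar>\<kappa> - 1\<bar> * \<bar>\<phi> a'\<bar> + \<bar>\<phi> a' - \<phi> u'\<bar>) \<le> \<bar>\<kappa> - 1\<bar> * \<bar>\<phi> a'\<bar> + \<bar>\<phi> a' - \<phi> u'\<bar>"
          using gu0 gu1 by (intro mult_left_le_one_le) simp_all
        ultimately show ?thesis by linarith
      qed
      also have "\<dots> < e/8 + (e/8 + e/4)"
      proof -
        have p1: "(1/lam) * \<bar>\<phi> (rst A w) - \<phi> (rst A x)\<bar> < e/8" using pAB \<phi>F by blast
        have p2: "\<bar>\<kappa> - 1\<bar> * C < e/8" using sk unfolding \<kappa>_def by (simp add: mult.commute)
        show ?thesis using p1 p2 by linarith
      qed
      finally show "\<bar>\<phi> a0 - \<phi> u\<bar> < e/2" by simp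
    qed
    have eb: "\<forall>\<phi>\<in>F. \<bar>\<phi> b0 - \<phi> v\<bar> < e/2"
    proof
      fix \<phi> assume \<phi>F: "\<phi> \<in> F"
      then have \<phi>: "\<phi> \<in> L1dual M" using F by blast
      have pb0: "\<phi> b0 = (1/nu) * \<phi> (rst B w) + (\<kappa> * gv) * \<phi> b'"
        unfolding b0_def by (rule dual_lin2[OF cM \<phi> wB b'L])
      have pv: "\<phi> v = (1/nu) * \<phi> (rst B x) + gv * \<phi> v'"
      proof -
        have "\<phi> v' = (1/gv) * \<phi> (rst E v)" unfolding v'_def by (rule dual_scale[OF \<phi> vEL])
        then show ?thesis using phi_v[OF \<phi>] phi_xB[OF \<phi>] gv0 lam_ne by simp
      qed
      have bnd: "\<bar>\<phi> b'\<bar> \<le> C" using C(2) \<phi>F b'L L1ball_norm[OF b'b] C(1)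
        by (meson mult_left_le order_trans)
      have "\<bar>\<phi> b0 - \<phi> v\<bar> = \<bar>(1/nu) * (\<phi> (rst B w) - \<phi> (rst B x)) + gv * ((\<kappa> - 1) * \<phi> b' + (\<phi> b' - \<phi> v'))\<bar>"
        unfolding pb0 pv by (simp add: algebra_simps)
      also have "\<dots> \<le> (1/nu) * \<bar>\<phi> (rst B w) - \<phi> (rst B x)\<bar> + gv * (\<bar>\<kappa> - 1\<bar> * \<bar>\<phi> b'\<bar> + \<bar>\<phi> b' - \<phi> v'\<bar>)"
        using nu0 gv0 by (simp add: abs_mult abs_triangle_ineq order_trans[OF abs_triangle_ineq] add_mono mult_left_mono)
      also have "\<dots> \<le> (1/nu) * \<bar>\<phi> (rst B w) - \<phi> (rst B x)\<bar> + (\<bar>\<kappa> - 1\<bar> * C + e/4)"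
      proof -
        have "\<bar>\<kappa> - 1\<bar> * \<bar>\<phi> b'\<bar> \<le> \<bar>\<kappa> - 1\<bar> * C" using bnd by (simp add: mult_left_mono)
        then have "\<bar>\<kappa> - 1\<bar> * \<bar>\<phi> b'\<bar> + \<bar>\<phi> b' - \<phi> v'\<bar> \<le> \<bar>\<kappa> - 1\<bar> * C + e/4" using b'c \<phi>F by fastforce
        moreover have "gv * (\<bar>\<kappa> - 1\<bar> * \<bar>\<phi> b'\<bar> + \<bar>\<phi> b' - \<phi> v'\<bar>) \<le> \<bar>\<kappa> - 1\<bar> * \<bar>\<phi> b'\<bar> + \<bar>\<phi> b' - \<phi> v'\<bar>"
          using gv0 gu1 by (intro mult_left_le_one_le) simp_all
        ultimately show ?thesis by linarith
      qed
      also have "\<dots> < e/8 + (e/8 + e/4)"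
      proof -
        have p1: "(1/nu) * \<bar>\<phi> (rst B w) - \<phi> (rst B x)\<bar> < e/8" using pAB \<phi>F by blast
        have p2: "\<bar>\<kappa> - 1\<bar> * C < e/8" using sk unfolding \<kappa>_def by (simp add: mult.commute)
        show ?thesis using p1 p2 by linarith
      qed
      finally show "\<bar>\<phi> b0 - \<phi> v\<bar> < e/2" by simp
    qed
    show "w \<in> L1comb M 2 (\<lambda>k. if k = 0 then lam else nu) (\<lambda>k. if k = 0 then U else V)"
      by (rule assemble[OF cM lam nu w a0L b0L eqw na nb ma0 mb0 tot C F(2) sm[unfolded K_def] ea eb U V])
  qed
qed

end


lemma two_set:
  fixes M :: "'a measure" and u v x :: "'a \<Rightarrow> 'b::banach"
  assumes cM: "complete_measure M"
    and H: "\<forall>(x :: 'a \<Rightarrow> 'b) y z lam nu U V.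
           x \<in> L1sphere M \<and> y \<in> L1sphere M \<and> z \<in> L1sphere M \<and>
           {\<omega> \<in> space M. (x \<omega> \<noteq> 0 \<and> y \<omega> = 0) \<or> (x \<omega> = 0 \<and> y \<omega> \<noteq> 0)} = {} \<and>
           0 < lam \<and> lam < 1 \<and> 0 < nu \<and> nu < 1 \<and> lam + nu = 1 \<and>
           L1eq M (\<lambda>\<omega>. lam *\<^sub>R x \<omega> + nu *\<^sub>R y \<omega>) z \<and>
           rel_weak_nhd M U x \<and> L1saturated M U \<and>
           rel_weak_nhd M V y \<and> L1saturated M V
           \<longrightarrow> (\<exists>W. rel_weak_nhd M W z \<and> L1saturated M W \<and>
                  W \<subseteq> L1comb M 2 (\<lambda>k. if k = 0 then lam else nu)
                                    (\<lambda>k. if k = 0 then U else V))"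
    and lam: "0 < lam" "lam < 1" and nu: "nu = 1 - lam"
    and U: "rel_weak_open M U" and V: "rel_weak_open M V" and u: "u \<in> U" and v: "v \<in> V"
    and xs: "x \<in> L1sphere M" and eq: "L1eq M x (\<lambda>\<omega>. lam *\<^sub>R u \<omega> + nu *\<^sub>R v \<omega>)"
  shows "\<exists>G. rel_weak_open M G \<and> x \<in> G \<and> G \<subseteq> L1comb M 2 (\<lambda>k. if k = 0 then lam else nu) (\<lambda>k. if k = 0 then U else V)"
proof -
  have ub: "u \<in> L1ball M" using U u unfolding rel_weak_open_def by blast
  have vb: "v \<in> L1ball M" using V v unfolding rel_weak_open_def by blast
  interpret ts: twoset M u v x lam nu by (intro twoset.intro cM lam nu ub vb xs eq)
  obtain FU eU where FU: "finite FU" "FU \<subseteq> L1dual M" "eU > 0" "{h \<in> L1ball M. \<forall>\<phi>\<in>FU. \<bar>\<phi> h - \<phi> u\<bar> < eU} \<subseteq> U"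
    using U u unfolding rel_weak_open_def by blast
  obtain FV eV where FV: "finite FV" "FV \<subseteq> L1dual M" "eV > 0" "{h \<in> L1ball M. \<forall>\<phi>\<in>FV. \<bar>\<phi> h - \<phi> v\<bar> < eV} \<subseteq> V"
    using V v unfolding rel_weak_open_def by blast
  define F where "F = FU \<union> FV"
  define e where "e = min eU eV"
  have F: "finite F" "F \<subseteq> L1dual M" unfolding F_def using FU FV by auto
  have e: "e > 0" unfolding e_def using FU FV by simp
  have "wN M F e u \<subseteq> {h \<in> L1ball M. \<forall>\<phi>\<in>FU. \<bar>\<phi> h - \<phi> u\<bar> < eU}" unfolding wN_def F_def e_def by auto
  then have UF: "wN M F e u \<subseteq> U" using FU(4) by blast
  have "wN M F e v \<subseteq> {h \<in> L1ball M. \<forall>\<phi>\<in>FV. \<bar>\<phi> h - \<phi> v\<bar> < eV}" unfolding wN_def F_def e_def by auto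
  then have VF: "wN M F e v \<subseteq> V" using FV(4) by blast
  obtain C where C: "C \<ge> 0" "\<forall>\<phi>\<in>F. \<forall>f\<in>L1 M. \<bar>\<phi> f\<bar> \<le> C * L1norm M f"
    using dual_finite_bound[OF F] by blast
  have ev: "eventually (\<lambda>w. w \<in> L1comb M 2 (\<lambda>k. if k = 0 then lam else nu) (\<lambda>k. if k = 0 then U else V)) (wnhds M x)"
  proof (cases "ts.gu = 0")
    case True
    then show ?thesis by (rule ts.case0[OF _ F e C UF VF])
  next
    case False
    then show ?thesis by (rule ts.case1[OF _ H F e C UF VF])
  qed
  have xb: "x \<in> L1ball M" using xs unfolding L1sphere_def L1ball_def by simp
  from wnhds_open_set[OF cM xb ev] show ?thesis by blast
qed

lemma cwo_main:
  fixes M :: "'a measure" and m :: nat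
  assumes cM: "complete_measure M"
    and H: "\<forall>(x :: 'a \<Rightarrow> 'b::banach) y z lam nu U V.
           x \<in> L1sphere M \<and> y \<in> L1sphere M \<and> z \<in> L1sphere M \<and>
           {\<omega> \<in> space M. (x \<omega> \<noteq> 0 \<and> y \<omega> = 0) \<or> (x \<omega> = 0 \<and> y \<omega> \<noteq> 0)} = {} \<and>
           0 < lam \<and> lam < 1 \<and> 0 < nu \<and> nu < 1 \<and> lam + nu = 1 \<and>
           L1eq M (\<lambda>\<omega>. lam *\<^sub>R x \<omega> + nu *\<^sub>R y \<omega>) z \<and>
           rel_weak_nhd M U x \<and> L1saturated M U \<and>
           rel_weak_nhd M V y \<and> L1saturated M V
           \<longrightarrow> (\<exists>W. rel_weak_nhd M W z \<and> L1saturated M W \<and>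
                  W \<subseteq> L1comb M 2 (\<lambda>k. if k = 0 then lam else nu)
                                    (\<lambda>k. if k = 0 then U else V))"
  shows "\<forall>lam (U :: nat \<Rightarrow> ('a \<Rightarrow> 'b) set).
     (\<forall>k<Suc m. lam k > 0) \<and> (\<Sum>k<Suc m. lam k) = 1 \<and> (\<forall>k<Suc m. rel_weak_open M (U k)) \<longrightarrow>
     (\<forall>x \<in> L1comb M (Suc m) lam U \<inter> L1sphere M. \<exists>G. rel_weak_open M G \<and> x \<in> G \<and> G \<subseteq> L1comb M (Suc m) lam U)"
proof (induction m)
  case 0
  show ?case
  proof (intro allI impI ballI)
    fix lam and U :: "nat \<Rightarrow> ('a \<Rightarrow> 'b) set" and x
    assume h: "(\<forall>k<Suc 0. lam k > 0) \<and> (\<Sum>k<Suc 0. lam k) = 1 \<and> (\<forall>k<Suc 0. rel_weak_open M (U k))"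
      and x: "x \<in> L1comb M (Suc 0) lam U \<inter> L1sphere M"
    have l1: "lam 0 = 1" using h by simp
    have U0: "rel_weak_open M (U 0)" using h by simp
    obtain uu where uu: "uu 0 \<in> U 0" "L1eq M x (\<lambda>\<omega>. lam 0 *\<^sub>R uu 0 \<omega>)" "x \<in> L1 M"
      using x unfolding L1comb_def by auto
    have "L1eq M x (uu 0)" using uu(2) l1 by simp
    then have xU: "x \<in> U 0" using open_sat[OF cM U0] uu(1,3) unfolding L1saturated_def by blast
    have "U 0 \<subseteq> L1comb M (Suc 0) lam U"
    proof
      fix w assume w: "w \<in> U 0"
      then have "w \<in> L1 M" using U0 unfolding rel_weak_open_def L1ball_def by blast
      moreover have "L1eq M w (\<lambda>\<omega>. \<Sum>k<Suc 0. lam k *\<^sub>R (\<lambda>k. w) k \<omega>)" using l1 by (simp add: L1eq_def)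
      ultimately show "w \<in> L1comb M (Suc 0) lam U" unfolding L1comb_def using w
        by (intro CollectI conjI exI[of _ "\<lambda>k. w"]) auto
    qed
    then show "\<exists>G. rel_weak_open M G \<and> x \<in> G \<and> G \<subseteq> L1comb M (Suc 0) lam U" using U0 xU by blast
  qed
next
  case (Suc m)
  define n where "n = Suc m"
  show ?case unfolding n_def[symmetric]
  proof (intro allI impI ballI)
    fix lam and U :: "nat \<Rightarrow> ('a \<Rightarrow> 'b) set" and x
    assume h: "(\<forall>k<Suc n. lam k > 0) \<and> (\<Sum>k<Suc n. lam k) = 1 \<and> (\<forall>k<Suc n. rel_weak_open M (U k))"
      and x: "x \<in> L1comb M (Suc n) lam U \<inter> L1sphere M"
    have pos: "\<And>k. k < Suc n \<Longrightarrow> lam k > 0" and opn: "\<And>k. k < Suc n \<Longrightarrow> rel_weak_open M (U k)"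
      and sm1: "(\<Sum>k<Suc n. lam k) = 1" using h by auto
    obtain uu where uu: "\<forall>k<Suc n. uu k \<in> U k" "L1eq M x (\<lambda>\<omega>. \<Sum>k<Suc n. lam k *\<^sub>R uu k \<omega>)"
      and xL: "x \<in> L1 M" using x unfolding L1comb_def by blast
    have xn: "L1norm M x = 1" using x unfolding L1sphere_def by blast
    have uub: "uu k \<in> L1ball M" if "k < Suc n" for k using uu(1) opn[OF that] that unfolding rel_weak_open_def by blast
    have uuL: "uu k \<in> L1 M" if "k < Suc n" for k using uub[OF that] by (rule L1ball_L1)
    define s where "s = (\<Sum>k<n. lam k)"
    define t where "t = lam n"
    have s0: "s > 0" unfolding s_def
    proof (rule sum_pos)
      show "finite {..<n}" by simp
      show "{..<n} \<noteq> {}" unfolding n_def by auto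
      show "\<And>i. i \<in> {..<n} \<Longrightarrow> 0 < lam i" using pos by auto
    qed
    have t0: "t > 0" unfolding t_def using pos by simp
    have st: "s + t = 1" using sm1 unfolding s_def t_def by simp
    have s1: "s < 1" using st t0 by simp
    define lam' where "lam' k = lam k / s" for k
    define y where "y = (\<lambda>\<omega>. \<Sum>k<n. lam' k *\<^sub>R uu k \<omega>)"
    have yL: "y \<in> L1 M" and yn: "L1norm M y \<le> (\<Sum>k<n. \<bar>lam' k\<bar> * L1norm M (uu k))"
      using L1_sum[OF cM, of n uu lam'] uuL unfolding y_def by auto
    have "(\<Sum>k<n. \<bar>lam' k\<bar> * L1norm M (uu k)) \<le> (\<Sum>k<n. lam' k)"
    proof (rule sum_mono)
      fix k assume "k \<in> {..<n}"
      then have "lam' k > 0" "L1norm M (uu k) \<le> 1" using pos s0 uub unfolding lam'_def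
        by (auto intro: L1ball_norm)
      then show "\<bar>lam' k\<bar> * L1norm M (uu k) \<le> lam' k" by (simp add: mult_left_le)
    qed
    also have "(\<Sum>k<n. lam' k) = 1" unfolding lam'_def using s0 by (simp add: sum_divide_distrib[symmetric] s_def)
    finally have yn1: "L1norm M y \<le> 1" using yn by simp
    have sy: "s *\<^sub>R y \<omega> = (\<Sum>k<n. lam k *\<^sub>R uu k \<omega>)" for \<omega>
      unfolding y_def lam'_def using s0 by (simp add: scaleR_sum_right)
    have eq2: "L1eq M x (\<lambda>\<omega>. s *\<^sub>R y \<omega> + t *\<^sub>R uu n \<omega>)"
      using uu(2) unfolding L1eq_def t_def by (simp add: sy)
    have unn: "L1norm M (uu n) \<le> 1" using uub[of n] by (simp add: L1ball_norm)
    have "1 = L1norm M (\<lambda>\<omega>. s *\<^sub>R y \<omega> + t *\<^sub>R uu n \<omega>)"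
      using L1norm_cong[OF cM L1_add[OF cM L1_scale[OF cM yL] L1_scale[OF cM uuL[of n]]] eq2] xn by simp
    also have "\<dots> \<le> L1norm M (\<lambda>\<omega>. s *\<^sub>R y \<omega>) + L1norm M (\<lambda>\<omega>. t *\<^sub>R uu n \<omega>)"
      by (rule L1norm_add_le[OF cM L1_scale[OF cM yL] L1_scale[OF cM uuL[of n]]]) simp
    also have "\<dots> = s * L1norm M y + t * L1norm M (uu n)"
      using L1norm_scale[OF cM yL, of s] L1norm_scale[OF cM uuL[of n], of t] s0 t0 by simp
    also have "\<dots> \<le> s * L1norm M y + t" using mult_left_mono[OF unn, of t] t0 by simp
    finally have "s * 1 \<le> s * L1norm M y" using st by simp
    then have "L1norm M y \<ge> 1" using s0 by (simp add: mult_le_cancel_left_pos)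
    then have ys: "y \<in> L1sphere M" using yn1 yL unfolding L1sphere_def by simp
    have yc: "y \<in> L1comb M n lam' U"
      unfolding L1comb_def using yL uu(1) by (intro CollectI conjI exI[of _ uu]) (auto simp: L1eq_def y_def)
    have IHp: "(\<forall>k<n. lam' k > 0) \<and> (\<Sum>k<n. lam' k) = 1 \<and> (\<forall>k<n. rel_weak_open M (U k))"
      using pos opn s0 \<open>(\<Sum>k<n. lam' k) = 1\<close> unfolding lam'_def by auto
    obtain G' where G': "rel_weak_open M G'" "y \<in> G'" "G' \<subseteq> L1comb M n lam' U"
      using Suc.IH[unfolded n_def[symmetric], rule_format, OF IHp] yc ys by blast
    have tn: "t = 1 - s" using st by simp
    obtain G where G: "rel_weak_open M G" "x \<in> G"
      "G \<subseteq> L1comb M 2 (\<lambda>k. if k = 0 then s else t) (\<lambda>k. if k = 0 then G' else U n)"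
      using two_set[OF cM H s0 s1 tn G'(1) opn[of n] G'(2) _ _ eq2] uu(1) x by auto
    have "L1comb M 2 (\<lambda>k. if k = 0 then s else t) (\<lambda>k. if k = 0 then G' else U n) \<subseteq> L1comb M (Suc n) lam U"
    proof
      fix w assume "w \<in> L1comb M 2 (\<lambda>k. if k = 0 then s else t) (\<lambda>k. if k = 0 then G' else U n)"
      then obtain ab where w0: "w \<in> L1 M" "\<forall>k<(2::nat). ab k \<in> (if k = 0 then G' else U n)"
        "L1eq M w (\<lambda>\<omega>. \<Sum>k<(2::nat). (if k = 0 then s else t) *\<^sub>R ab k \<omega>)"
        unfolding L1comb_def by blast
      have w: "w \<in> L1 M" "ab 0 \<in> G'" "ab 1 \<in> U n"
        "L1eq M w (\<lambda>\<omega>. s *\<^sub>R ab 0 \<omega> + t *\<^sub>R ab 1 \<omega>)"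
        using w0(1) spec[OF w0(2), of 0] spec[OF w0(2), of 1] w0(3) unfolding sum2 by simp_all
      then obtain cc where cc: "\<forall>k<n. cc k \<in> U k" "L1eq M (ab 0) (\<lambda>\<omega>. \<Sum>k<n. lam' k *\<^sub>R cc k \<omega>)"
        using G'(3) unfolding L1comb_def by blast
      define dd where "dd k = (if k < n then cc k else ab 1)" for k
      have "\<forall>k<Suc n. dd k \<in> U k" using cc(1) w(3) unfolding dd_def by (auto simp: less_Suc_eq)
      moreover have "L1eq M w (\<lambda>\<omega>. \<Sum>k<Suc n. lam k *\<^sub>R dd k \<omega>)"
        using w(4) cc(2) unfolding L1eq_def
      proof eventually_elim
        fix \<omega> assume h1: "w \<omega> = s *\<^sub>R ab 0 \<omega> + t *\<^sub>R ab 1 \<omega>" and h2: "ab 0 \<omega> = (\<Sum>k<n. lam' k *\<^sub>R cc k \<omega>)"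
        have "s *\<^sub>R ab 0 \<omega> = (\<Sum>k<n. lam k *\<^sub>R dd k \<omega>)"
          unfolding h2 lam'_def dd_def using s0 by (simp add: scaleR_sum_right)
        then show "w \<omega> = (\<Sum>k<Suc n. lam k *\<^sub>R dd k \<omega>)" using h1 unfolding t_def dd_def by simp
      qed
      ultimately show "w \<in> L1comb M (Suc n) lam U" unfolding L1comb_def using w(1) by blast
    qed
    then show "\<exists>G. rel_weak_open M G \<and> x \<in> G \<and> G \<subseteq> L1comb M (Suc n) lam U" using G by blast
  qed
qed

theorem lemma2p1:
  fixes M :: "'a measure"
  assumes "complete_measure M"
    and "emeasure M (space M) \<noteq> 0"
    and "\<forall>(x :: 'a \<Rightarrow> 'b::banach) y z lam nu U V.
           x \<in> L1sphere M \<and> y \<in> L1sphere M \<and> z \<in> L1sphere M \<and>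
           {\<omega> \<in> space M. (x \<omega> \<noteq> 0 \<and> y \<omega> = 0) \<or> (x \<omega> = 0 \<and> y \<omega> \<noteq> 0)} = {} \<and>
           0 < lam \<and> lam < 1 \<and> 0 < nu \<and> nu < 1 \<and> lam + nu = 1 \<and>
           L1eq M (\<lambda>\<omega>. lam *\<^sub>R x \<omega> + nu *\<^sub>R y \<omega>) z \<and>
           rel_weak_nhd M U x \<and> L1saturated M U \<and>
           rel_weak_nhd M V y \<and> L1saturated M V
           \<longrightarrow> (\<exists>W. rel_weak_nhd M W z \<and> L1saturated M W \<and>
                  W \<subseteq> L1comb M 2 (\<lambda>k. if k = 0 then lam else nu)
                                    (\<lambda>k. if k = 0 then U else V))"
  shows "L1_CWO_S M TYPE('a \<Rightarrow> 'b)"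
  unfolding L1_CWO_S_def
proof (intro allI impI ballI)
  fix m lam and U :: "nat \<Rightarrow> ('a \<Rightarrow> 'b) set" and x
  assume h: "(\<forall>k<m. 0 < lam k) \<and> (\<Sum>k<m. lam k) = 1 \<and> (\<forall>k<m. rel_weak_open M (U k))"
    and x: "x \<in> L1comb M m lam U \<inter> L1sphere M"
  show "\<exists>G. rel_weak_open M G \<and> x \<in> G \<and> G \<subseteq> L1comb M m lam U"
  proof (cases m)
    case 0
    then show ?thesis using h by simp
  next
    case (Suc n)
    then show ?thesis using cwo_main[OF assms(1) assms(3), of n] h x by blast
  qed
qed


end
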